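(* For every $1\le i<n$, the automorphism $T_i$ of ${\boldsymbol U}_{v}(\mathfrak q_n)$ satisfies $T_i({\boldsymbol U}_{v,\mathcal Z})={\boldsymbol U}_{v,\mathcal Z}$.
   Context: Let $v$ be an indeterminate. The quantum queer superalgebra ${\boldsymbol U}_{v}(\mathfrak q_n)$ is the associative superalgebra over $\mathbb Q(v)$ generated by even generators $\mathsf K_i,\mathsf K_i^{-1}$ ($1\le i\le n$), $\mathsf E_j,\mathsf F_j$ ($1\le j\le n-1$) and odd generators $\mathsf K_{\bar i}$ ($1\le i\le n$), $\mathsf E_{\bar j},\mathsf F_{\bar j}$ ($1\le j\le n-1$), subject to the following relations (indices are taken only where they make sense), where $(\epsilon_i,\alpha_j)=\delta_{i,j}-\delta_{i,j+1}$: (QQ1) $\mathsf K_i\mathsf K_i^{-1}=\mathsf K_i^{-1}\mathsf K_i=1$, $\mathsf K_i\mathsf K_j=\mathsf K_j\mathsf K_i$, $\mathsf K_i\mathsf K_{\bar j}=\mathsf K_{\bar j}\mathsf K_i$, $\mathsf K_{\bar i}\mathsf K_{\bar j}+\mathsf K_{\bar j}\mathsf K_{\bar i}=2\delta_{i,j}\frac{\mathsf K_i^2-\mathsf K_i^{-2}}{v^2-v^{-2}}$. (QQ2) $\mathsf K_i\mathsf E_j=v^{(\epsilon_i,\alpha_j)}\mathsf E_j\mathsf K_i$, $\mathsf K_i\mathsf E_{\bar j}=v^{(\epsilon_i,\alpha_j)}\mathsf E_{\bar j}\mathsf K_i$, $\mathsf K_i\mathsf F_j=v^{-(\epsilon_i,\alpha_j)}\mathsf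 F_j\mathsf K_i$, $\mathsf K_i\mathsf F_{\bar j}=v^{-(\epsilon_i,\alpha_j)}\mathsf F_{\bar j}\mathsf K_i$. (QQ3) $\mathsf K_{\bar i}\mathsf E_i-v\mathsf E_i\mathsf K_{\bar i}=\mathsf E_{\bar i}\mathsf K_i^{-1}$, $v\mathsf K_{\bar i}\mathsf E_{i-1}-\mathsf E_{i-1}\mathsf K_{\bar i}=-\mathsf K_i^{-1}\mathsf E_{\overline{i-1}}$, $\mathsf K_{\bar i}\mathsf F_i-v\mathsf F_i\mathsf K_{\bar i}=-\mathsf F_{\bar i}\mathsf K_i$, $v\mathsf K_{\bar i}\mathsf F_{i-1}-\mathsf F_{i-1}\mathsf K_{\bar i}=\mathsf K_i\mathsf F_{\overline{i-1}}$, $\mathsf K_{\bar i}\mathsf E_{\bar i}+v\mathsf E_{\bar i}\mathsf K_{\bar i}=\mathsf E_i\mathsf K_i^{-1}$, $v\mathsf K_{\bar i}\mathsf E_{\overline{i-1}}+\mathsf E_{\overline{i-1}}\mathsf K_{\bar i}=\mathsf K_i^{-1}\mathsf E_{i-1}$, $\mathsf K_{\bar i}\mathsf F_{\bar i}+v\mathsf F_{\bar i}\mathsf K_{\bar i}=\mathsf F_i\mathsf K_i$, $v\mathsf K_{\bar i}\mathsf F_{\overline{i-1}}+\mathsf F_{\overline{i-1}}\mathsf K_{\bar i}=\mathsf K_i\mathsf F_{i-1}$, and for $j\ne i,i-1$: $\mathsf K_{\bar i}\mathsf E_j=\mathsf E_j\mathsf K_{\bar i}$, $\mathsf K_{\bar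 i}\mathsf F_j=\mathsf F_j\mathsf K_{\bar i}$, $\mathsf K_{\bar i}\mathsf E_{\bar j}=-\mathsf E_{\bar j}\mathsf K_{\bar i}$, $\mathsf K_{\bar i}\mathsf F_{\bar j}=-\mathsf F_{\bar j}\mathsf K_{\bar i}$. (QQ4) $\mathsf E_i\mathsf F_j-\mathsf F_j\mathsf E_i=\delta_{i,j}\frac{\mathsf K_i\mathsf K_{i+1}^{-1}-\mathsf K_i^{-1}\mathsf K_{i+1}}{v-v^{-1}}$, $\mathsf E_{\bar i}\mathsf F_{\bar j}+\mathsf F_{\bar j}\mathsf E_{\bar i}=\delta_{i,j}\big(\frac{\mathsf K_i\mathsf K_{i+1}-\mathsf K_i^{-1}\mathsf K_{i+1}^{-1}}{v-v^{-1}}+(v-v^{-1})\mathsf K_{\bar i}\mathsf K_{\overline{i+1}}\big)$, $\mathsf E_i\mathsf F_{\bar j}-\mathsf F_{\bar j}\mathsf E_i=\delta_{i,j}(\mathsf K_{i+1}^{-1}\mathsf K_{\bar i}-\mathsf K_{\overline{i+1}}\mathsf K_i^{-1})$, $\mathsf E_{\bar i}\mathsf F_j-\mathsf F_j\mathsf E_{\bar i}=\delta_{i,j}(\mathsf K_{i+1}\mathsf K_{\bar i}-\mathsf K_{\overline{i+1}}\mathsf K_i)$. (QQ5) $\mathsf E_{\bar i}^2=-\frac{v-v^{-1}}{v+v^{-1}}\mathsf E_i^2$, $\mathsf F_{\bar i}^2=\frac{v-v^{-1}}{v+v^{-1}}\mathsf F_i^2$; for $|i-j|\ne1$: $\mathsf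 E_i\mathsf E_{\bar j}=\mathsf E_{\bar j}\mathsf E_i$, $\mathsf F_i\mathsf F_{\bar j}=\mathsf F_{\bar j}\mathsf F_i$; for $|i-j|>1$: $\mathsf E_i\mathsf E_j=\mathsf E_j\mathsf E_i$, $\mathsf F_i\mathsf F_j=\mathsf F_j\mathsf F_i$, $\mathsf E_{\bar i}\mathsf E_{\bar j}=-\mathsf E_{\bar j}\mathsf E_{\bar i}$, $\mathsf F_{\bar i}\mathsf F_{\bar j}=-\mathsf F_{\bar j}\mathsf F_{\bar i}$; $\mathsf E_i\mathsf E_{i+1}-v\mathsf E_{i+1}\mathsf E_i=\mathsf E_{\bar i}\mathsf E_{\overline{i+1}}+v\mathsf E_{\overline{i+1}}\mathsf E_{\bar i}$, $\mathsf E_i\mathsf E_{\overline{i+1}}-v\mathsf E_{\overline{i+1}}\mathsf E_i=\mathsf E_{\bar i}\mathsf E_{i+1}-v\mathsf E_{i+1}\mathsf E_{\bar i}$, $\mathsf F_i\mathsf F_{i+1}-v\mathsf F_{i+1}\mathsf F_i=-(\mathsf F_{\bar i}\mathsf F_{\overline{i+1}}+v\mathsf F_{\overline{i+1}}\mathsf F_{\bar i})$, $\mathsf F_i\mathsf F_{\overline{i+1}}-v\mathsf F_{\overline{i+1}}\mathsf F_i=\mathsf F_{\bar i}\mathsf F_{i+1}-v\mathsf F_{i+1}\mathsf F_{\bar i}$. (QQ6) for $|i-j|=1$: $\mathsf E_i^2X-(v+v^{-1})\mathsf E_iX\mathsf E_i+X\mathsf E_i^2=0$ for $X\in\{\mathsf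 E_j,\mathsf E_{\bar j}\}$ and $\mathsf F_i^2Y-(v+v^{-1})\mathsf F_iY\mathsf F_i+Y\mathsf F_i^2=0$ for $Y\in\{\mathsf F_j,\mathsf F_{\bar j}\}$. Notation: $[m]_v=\frac{v^m-v^{-m}}{v-v^{-1}}$, $[m]_v^!=[m]_v[m-1]_v\cdots[1]_v$, $[0]_v^!=1$; for $Y$ in a $\mathbb Q(v)$-algebra $Y^{(m)}=Y^m/[m]_v^!$; for invertible $Y$, $c\in\mathbb Z$, $t\ge1$: $\left[\begin{smallmatrix}Y;c\\ t\end{smallmatrix}\right]_v=\prod_{s=1}^t\frac{Yv^{c-s+1}-Y^{-1}v^{-c+s-1}}{v^s-v^{-s}}$, equal to $1$ for $t=0$; and $\left[\begin{smallmatrix}\mathsf K_i\\ t\end{smallmatrix}\right]_v=\left[\begin{smallmatrix}\mathsf K_i;0\\ t\end{smallmatrix}\right]_v$. Let $\mathcal Z=\mathbb Z[v,v^{-1}]$. The Lusztig integral form ${\boldsymbol U}_{v,\mathcal Z}$ is the $\mathcal Z$-subsuperalgebra of ${\boldsymbol U}_{v}(\mathfrak q_n)$ generated by $\mathsf K_i^{\pm1}$, $\left[\begin{smallmatrix}\mathsf K_i\\ t\end{smallmatrix}\right]_v$, $\mathsf K_{\bar i}$ ($1\le i\le n$, $t\in\mathbb N$), $\mathsf E_j^{(m)},\mathsf F_j^{(m)},\mathsf E_{\bar j},\mathsf F_{\bar j}$ ($1\le j\le n-1$, $m\in\mathbb N$). Braid automorphisms: for $1\le i\le n-1$, $T_i$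 denotes the $\mathbb Q(v)$-superalgebra automorphism of ${\boldsymbol U}_{v}(\mathfrak q_n)$ given on generators by: $T_i(\mathsf K_k^{\pm1})=\mathsf K_{s_i(k)}^{\pm1}$ ($s_i$ the transposition $(i,i+1)$); $T_i(\mathsf K_{\overline{i-1}})=\mathsf K_{\overline{i-1}}$, $T_i(\mathsf K_{\bar i})=\mathsf K_{\overline{i+1}}$, $T_i(\mathsf K_{\overline{i+1}})=(v-v^{-1})\mathsf K_{\overline{i+1}}\mathsf F_i\mathsf E_i-(v-v^{-1})\mathsf F_i\mathsf E_i\mathsf K_{\overline{i+1}}+\mathsf K_{\bar i}$; $T_i(\mathsf E_i)=-\mathsf F_i\mathsf K_i\mathsf K_{i+1}^{-1}$, $T_i(\mathsf F_i)=-\mathsf K_i^{-1}\mathsf K_{i+1}\mathsf E_i$, $T_i(\mathsf E_{\bar i})=-\mathsf K_{\overline{i+1}}\mathsf F_i\mathsf K_i+v\mathsf F_i\mathsf K_{\overline{i+1}}\mathsf K_i$, $T_i(\mathsf F_{\bar i})=-\mathsf K_i^{-1}\mathsf E_i\mathsf K_{\overline{i+1}}+v^{-1}\mathsf K_{\overline{i+1}}\mathsf K_i^{-1}\mathsf E_i$; for $|i-j|=1$: $T_i(\mathsf E_j)=-\mathsf E_i\mathsf E_j+v^{-1}\mathsf E_j\mathsf E_i$, $T_i(\mathsf F_j)=-\mathsf F_j\mathsf F_i+v\mathsf F_i\mathsf F_j$, $T_i(\mathsf E_{\bar j})=-\mathsf E_i\mathsf E_{\bar j}+v^{-1}\mathsf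 E_{\bar j}\mathsf E_i$, $T_i(\mathsf F_{\bar j})=-\mathsf F_{\bar j}\mathsf F_i+v\mathsf F_i\mathsf F_{\bar j}$; for $|i-j|>1$: $T_i$ fixes $\mathsf E_j,\mathsf F_j,\mathsf K_{\bar j},\mathsf E_{\bar j},\mathsf F_{\bar j}$. (That these assignments define an automorphism is part of the setting.) *)

theory Defs
  imports "HOL-Library.Poly_Mapping" "HOL-Computational_Algebra.Polynomial"
          "HOL-Computational_Algebra.Fraction_Field"
begin

section \<open>The base field Q(v) and the ring Z = Z[v,v^-1]\<close>

type_synonym qv = "rat poly fract"

definition vv :: qv where "vv = Fract [:0, 1:] 1"

definition vpow :: "int \<Rightarrow> qv" where
  "vpow k = (if 0 \<le> k then vv ^ nat k else inverse vv ^ nat (- k))"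

definition Zset :: "qv set" where
  "Zset = {c. \<exists>(p::int poly) (k::nat). c = Fract (map_poly of_int p) 1 / vv ^ k}"

definition qint :: "nat \<Rightarrow> qv" where
  "qint m = (vv ^ m - inverse vv ^ m) / (vv - inverse vv)"

definition qfact :: "nat \<Rightarrow> qv" where
  "qfact m = (\<Prod>k\<in>{1..m}. qint k)"

datatype gen = GK nat | GKi nat | GKb nat | GE nat | GF nat | GEb nat | GFb nat
  \<comment> \<open>GK i = K_i, GKi i = K_i^{-1}, GKb i = K_{bar i}, GE j = E_j, GF j = F_j,
      GEb j = E_{bar j}, GFb j = F_{bar j}\<close>

datatype 'a fword = FWord "'a list"

instantiation fword :: (type) monoid_add
begin
definition zero_fword_def: "0 = FWord []"
fun plus_fword :: "'a fword \<Rightarrow> 'a fword \<Rightarrow> 'a fword" where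
  "plus_fword (FWord a) (FWord b) = FWord (a @ b)"
instance
proof
  fix a b c :: "'a fword"
  show "a + b + c = a + (b + c)" by (cases a; cases b; cases c) auto
  show "0 + a = a" by (cases a) (auto simp: zero_fword_def)
  show "a + 0 = a" by (cases a) (auto simp: zero_fword_def)
qed
end

text \<open>Noncommutative polynomials: finitely supported functions from words to Q(v),
  with concatenation-convolution product.\<close>
type_synonym alg = "gen fword \<Rightarrow>\<^sub>0 qv"

definition sc :: "qv \<Rightarrow> alg" where "sc c = Poly_Mapping.single 0 c"

definition g :: "gen \<Rightarrow> alg" where "g x = Poly_Mapping.single (FWord [x]) 1"

abbreviation "Kg i \<equiv> g (GK i)"
abbreviation "Kig i \<equiv> g (GKi i)"
abbreviation "Kbg i \<equiv> g (GKb i)"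
abbreviation "Eg j \<equiv> g (GE j)"
abbreviation "Fg j \<equiv> g (GF j)"
abbreviation "Ebg j \<equiv> g (GEb j)"
abbreviation "Fbg j \<equiv> g (GFb j)"

fun word_eval :: "(gen \<Rightarrow> alg) \<Rightarrow> gen fword \<Rightarrow> alg" where
  "word_eval f (FWord l) = prod_list (map f l)"

definition hom_ext :: "(gen \<Rightarrow> alg) \<Rightarrow> alg \<Rightarrow> alg" where
  "hom_ext f x = (\<Sum>w\<in>Poly_Mapping.keys x. sc (Poly_Mapping.lookup x w) * word_eval f w)"

section \<open>Defining relations of U_v(q_n)\<close>

definition valid :: "nat \<Rightarrow> gen \<Rightarrow> bool" where
  "valid n x = (case x of
      GK i \<Rightarrow> 1 \<le> i \<and> i \<le> n | GKi i \<Rightarrow> 1 \<le> i \<and> i \<le> n | GKb i \<Rightarrow> 1 \<le> i \<and> i \<le> n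
    | GE j \<Rightarrow> 1 \<le> j \<and> j < n | GF j \<Rightarrow> 1 \<le> j \<and> j < n
    | GEb j \<Rightarrow> 1 \<le> j \<and> j < n | GFb j \<Rightarrow> 1 \<le> j \<and> j < n)"

definition pair :: "nat \<Rightarrow> nat \<Rightarrow> int" where
  "pair i j = (if i = j then 1 else 0) - (if i = j + 1 then 1 else 0)"
  \<comment> \<open>(epsilon_i, alpha_j)\<close>

definition dl :: "nat \<Rightarrow> nat \<Rightarrow> alg \<Rightarrow> alg" where
  "dl i j x = (if i = j then x else 0)"

abbreviation "vi \<equiv> inverse vv"

text \<open>Set of elements required to vanish (each relation written as LHS - RHS).
  Generators with out-of-range indices are set to zero, so the quotient is exactly
  U_v(q_n).\<close>
definition rels :: "nat \<Rightarrow> alg set" where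
  "rels n =
    {g x | x. \<not> valid n x}
  \<union> \<comment> \<open>QQ1\<close>
    (\<Union>i\<in>{1..n}. \<Union>j\<in>{1..n}.
      {Kg i * Kig i - 1, Kig i * Kg i - 1, Kg i * Kg j - Kg j * Kg i,
       Kg i * Kbg j - Kbg j * Kg i,
       Kbg i * Kbg j + Kbg j * Kbg i
         - dl i j (sc 2 * (Kg i ^ 2 - Kig i ^ 2) * sc (1 / (vv ^ 2 - vi ^ 2)))})
  \<union> \<comment> \<open>QQ2\<close>
    (\<Union>i\<in>{1..n}. \<Union>j\<in>{1..<n}.
      {Kg i * Eg j - sc (vpow (pair i j)) * Eg j * Kg i,
       Kg i * Ebg j - sc (vpow (pair i j)) * Ebg j * Kg i,
       Kg i * Fg j - sc (vpow (- pair i j)) * Fg j * Kg i,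
       Kg i * Fbg j - sc (vpow (- pair i j)) * Fbg j * Kg i})
  \<union> \<comment> \<open>QQ3, relations with E_i, F_i\<close>
    (\<Union>i\<in>{1..<n}.
      {Kbg i * Eg i - sc vv * Eg i * Kbg i - Ebg i * Kig i,
       Kbg i * Fg i - sc vv * Fg i * Kbg i + Fbg i * Kg i,
       Kbg i * Ebg i + sc vv * Ebg i * Kbg i - Eg i * Kig i,
       Kbg i * Fbg i + sc vv * Fbg i * Kbg i - Fg i * Kg i})
  \<union> \<comment> \<open>QQ3, relations with E_{i-1}, F_{i-1}\<close>
    (\<Union>i\<in>{2..n}.
      {sc vv * Kbg i * Eg (i - 1) - Eg (i - 1) * Kbg i + Kig i * Ebg (i - 1),
       sc vv * Kbg i * Fg (i - 1) - Fg (i - 1) * Kbg i - Kg i * Fbg (i - 1),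
       sc vv * Kbg i * Ebg (i - 1) + Ebg (i - 1) * Kbg i - Kig i * Eg (i - 1),
       sc vv * Kbg i * Fbg (i - 1) + Fbg (i - 1) * Kbg i - Kg i * Fg (i - 1)})
  \<union> \<comment> \<open>QQ3, j different from i, i-1\<close>
    (\<Union>i\<in>{1..n}. \<Union>j\<in>{j. 1 \<le> j \<and> j < n \<and> j \<noteq> i \<and> j + 1 \<noteq> i}.
      {Kbg i * Eg j - Eg j * Kbg i, Kbg i * Fg j - Fg j * Kbg i,
       Kbg i * Ebg j + Ebg j * Kbg i, Kbg i * Fbg j + Fbg j * Kbg i})
  \<union> \<comment> \<open>QQ4\<close>
    (\<Union>i\<in>{1..<n}. \<Union>j\<in>{1..<n}.
      {Eg i * Fg j - Fg j * Eg i
         - dl i j ((Kg i * Kig (i + 1) - Kig i * Kg (i + 1)) * sc (1 / (vv - vi))),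
       Ebg i * Fbg j + Fbg j * Ebg i
         - dl i j ((Kg i * Kg (i + 1) - Kig i * Kig (i + 1)) * sc (1 / (vv - vi))
                   + sc (vv - vi) * Kbg i * Kbg (i + 1)),
       Eg i * Fbg j - Fbg j * Eg i - dl i j (Kig (i + 1) * Kbg i - Kbg (i + 1) * Kig i),
       Ebg i * Fg j - Fg j * Ebg i - dl i j (Kg (i + 1) * Kbg i - Kbg (i + 1) * Kg i)})
  \<union> \<comment> \<open>QQ5, squares\<close>
    (\<Union>i\<in>{1..<n}.
      {Ebg i ^ 2 + sc ((vv - vi) / (vv + vi)) * Eg i ^ 2,
       Fbg i ^ 2 - sc ((vv - vi) / (vv + vi)) * Fg i ^ 2})
  \<union> \<comment> \<open>QQ5, |i-j| \<noteq> 1\<close>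
    (\<Union>i\<in>{1..<n}. \<Union>j\<in>{j. 1 \<le> j \<and> j < n \<and> i + 1 \<noteq> j \<and> j + 1 \<noteq> i}.
      {Eg i * Ebg j - Ebg j * Eg i, Fg i * Fbg j - Fbg j * Fg i})
  \<union> \<comment> \<open>QQ5, |i-j| > 1\<close>
    (\<Union>i\<in>{1..<n}. \<Union>j\<in>{j. 1 \<le> j \<and> j < n \<and> (i + 1 < j \<or> j + 1 < i)}.
      {Eg i * Eg j - Eg j * Eg i, Fg i * Fg j - Fg j * Fg i,
       Ebg i * Ebg j + Ebg j * Ebg i, Fbg i * Fbg j + Fbg j * Fbg i})
  \<union> \<comment> \<open>QQ5, consecutive indices\<close>
    (\<Union>i\<in>{i. 1 \<le> i \<and> i + 1 < n}.
      {Eg i * Eg (i + 1) - sc vv * Eg (i + 1) * Eg i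
         - (Ebg i * Ebg (i + 1) + sc vv * Ebg (i + 1) * Ebg i),
       Eg i * Ebg (i + 1) - sc vv * Ebg (i + 1) * Eg i
         - (Ebg i * Eg (i + 1) - sc vv * Eg (i + 1) * Ebg i),
       Fg i * Fg (i + 1) - sc vv * Fg (i + 1) * Fg i
         + (Fbg i * Fbg (i + 1) + sc vv * Fbg (i + 1) * Fbg i),
       Fg i * Fbg (i + 1) - sc vv * Fbg (i + 1) * Fg i
         - (Fbg i * Fg (i + 1) - sc vv * Fg (i + 1) * Fbg i)})
  \<union> \<comment> \<open>QQ6\<close>
    (\<Union>i\<in>{1..<n}. \<Union>j\<in>{j. 1 \<le> j \<and> j < n \<and> (i + 1 = j \<or> j + 1 = i)}.
      (\<Union>X\<in>{Eg j, Ebg j}. {Eg i ^ 2 * X - sc (vv + vi) * Eg i * X * Eg i + X * Eg i ^ 2})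
    \<union> (\<Union>Y\<in>{Fg j, Fbg j}. {Fg i ^ 2 * Y - sc (vv + vi) * Fg i * Y * Fg i + Y * Fg i ^ 2}))"

text \<open>Two-sided ideal of the free algebra generated by the relations;
  U_v(q_n) is the quotient of the free algebra by it.\<close>
inductive_set rel_ideal :: "nat \<Rightarrow> alg set" for n where
  gen: "r \<in> rels n \<Longrightarrow> r \<in> rel_ideal n"
| zero: "0 \<in> rel_ideal n"
| add: "a \<in> rel_ideal n \<Longrightarrow> b \<in> rel_ideal n \<Longrightarrow> a + b \<in> rel_ideal n"
| mult: "a \<in> rel_ideal n \<Longrightarrow> x * a * y \<in> rel_ideal n"

section \<open>Lusztig integral form\<close>

definition qbinK :: "nat \<Rightarrow> nat \<Rightarrow> alg" where
  "qbinK i t = prod_list (map (\<lambda>s.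
     (Kg i * sc (vpow (1 - int s)) - Kig i * sc (vpow (int s - 1))) * sc (1 / (vv ^ s - vi ^ s)))
     [1..<t + 1])"
  \<comment> \<open>[K_i; 0; t]_v, lifted to the free algebra\<close>

definition UZ_gens :: "nat \<Rightarrow> alg set" where
  "UZ_gens n =
     (\<Union>i\<in>{1..n}. {Kg i, Kig i, Kbg i} \<union> {qbinK i t | t. True})
   \<union> (\<Union>j\<in>{1..<n}. {Ebg j, Fbg j} \<union> {sc (1 / qfact m) * Eg j ^ m | m. True}
                                  \<union> {sc (1 / qfact m) * Fg j ^ m | m. True})"

inductive_set zsubalg :: "alg set \<Rightarrow> alg set" for S where
  one: "1 \<in> zsubalg S"
| gen: "s \<in> S \<Longrightarrow> s \<in> zsubalg S"
| smult: "c \<in> Zset \<Longrightarrow> a \<in> zsubalg S \<Longrightarrow> sc c * a \<in> zsubalg S"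
| add: "a \<in> zsubalg S \<Longrightarrow> b \<in> zsubalg S \<Longrightarrow> a + b \<in> zsubalg S"
| mult: "a \<in> zsubalg S \<Longrightarrow> b \<in> zsubalg S \<Longrightarrow> a * b \<in> zsubalg S"

definition UZ :: "nat \<Rightarrow> alg set" where "UZ n = zsubalg (UZ_gens n)"

section \<open>Braid automorphism T_i, on generators\<close>

definition swp :: "nat \<Rightarrow> nat \<Rightarrow> nat" where
  "swp i k = (if k = i then i + 1 else if k = i + 1 then i else k)"

fun Tg :: "nat \<Rightarrow> gen \<Rightarrow> alg" where
  "Tg i (GK k) = Kg (swp i k)"
| "Tg i (GKi k) = Kig (swp i k)"
| "Tg i (GKb k) =
     (if k = i then Kbg (i + 1)
      else if k = i + 1 then sc (vv - vi) * Kbg (i + 1) * Fg i * Eg i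
                            - sc (vv - vi) * Fg i * Eg i * Kbg (i + 1) + Kbg i
      else Kbg k)"
| "Tg i (GE j) =
     (if j = i then - Fg i * Kg i * Kig (i + 1)
      else if i + 1 = j \<or> j + 1 = i then - Eg i * Eg j + sc vi * Eg j * Eg i
      else Eg j)"
| "Tg i (GF j) =
     (if j = i then - Kig i * Kg (i + 1) * Eg i
      else if i + 1 = j \<or> j + 1 = i then - Fg j * Fg i + sc vv * Fg i * Fg j
      else Fg j)"
| "Tg i (GEb j) =
     (if j = i then - Kbg (i + 1) * Fg i * Kg i + sc vv * Fg i * Kbg (i + 1) * Kg i
      else if i + 1 = j \<or> j + 1 = i then - Eg i * Ebg j + sc vi * Ebg j * Eg i
      else Ebg j)"
| "Tg i (GFb j) =
     (if j = i then - Kig i * Eg i * Kbg (i + 1) + sc vi * Kbg (i + 1) * Kig i * Eg i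
      else if i + 1 = j \<or> j + 1 = i then - Fbg j * Fg i + sc vv * Fg i * Fbg j
      else Fbg j)"

definition Tfree :: "nat \<Rightarrow> alg \<Rightarrow> alg" where "Tfree i = hom_ext (Tg i)"

end

theory Submission
  imports Defs
begin


lemma vv_nz[simp]: "vv \<noteq> 0" unfolding vv_def by (simp add: Zero_fract_def eq_fract)

lemma expand_pm: "(x::'a::monoid_add \<Rightarrow>\<^sub>0 'b::semiring_0) = (\<Sum>w\<in>Poly_Mapping.keys x. Poly_Mapping.single w (Poly_Mapping.lookup x w))"
proof (rule poly_mapping_eqI)
  fix k
  have "Poly_Mapping.lookup (\<Sum>w\<in>Poly_Mapping.keys x. Poly_Mapping.single w (Poly_Mapping.lookup x w)) k
     = (\<Sum>w\<in>Poly_Mapping.keys x. Poly_Mapping.lookup (Poly_Mapping.single w (Poly_Mapping.lookup x w)) k)"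
    by (simp add: lookup_sum)
  also have "\<dots> = (if k \<in> Poly_Mapping.keys x then Poly_Mapping.lookup x k else 0)"
    by (simp add: lookup_single when_def sum.delta)
  also have "\<dots> = Poly_Mapping.lookup x k" by (auto simp: in_keys_iff)
  finally show "Poly_Mapping.lookup x k = Poly_Mapping.lookup (\<Sum>w\<in>Poly_Mapping.keys x. Poly_Mapping.single w (Poly_Mapping.lookup x w)) k" by simp
qed

lemma sc_comm: "sc c * x = x * sc c"
proof -
  have "sc c * x = (\<Sum>w\<in>Poly_Mapping.keys x. sc c * Poly_Mapping.single w (Poly_Mapping.lookup x w))"
    by (subst expand_pm[of x]) (simp add: sum_distrib_left)
  also have "\<dots> = (\<Sum>w\<in>Poly_Mapping.keys x. Poly_Mapping.single w (Poly_Mapping.lookup x w) * sc c)"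
    by (simp add: sc_def mult_single mult.commute)
  also have "\<dots> = x * sc c"
    by (subst (2) expand_pm[of x]) (simp add: sum_distrib_right)
  finally show ?thesis .
qed

lemma sc_mult: "sc a * sc b = sc (a * b)" by (simp add: sc_def mult_single)
lemma sc_add: "sc (a + b) = sc a + sc b" by (simp add: sc_def single_add)
lemma sc_diff: "sc (a - b) = sc a - sc b" by (simp add: sc_def single_diff)
lemma sc_uminus: "sc (- a) = - sc a" by (simp add: sc_def single_uminus)
lemma sc_1[simp]: "sc 1 = 1" by (simp add: sc_def)
lemma sc_0[simp]: "sc 0 = 0" by (simp add: sc_def)
lemma sc_power: "sc a ^ m = sc (a ^ m)" by (induct m) (auto simp: sc_mult)

lemma sc_rc: "NO_MATCH (sc d) x \<Longrightarrow> x * sc c = sc c * x" by (simp add: sc_comm)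
lemma sc_lc: "NO_MATCH (sc d) x \<Longrightarrow> x * (sc c * y) = sc c * (x * y)"
  by (metis mult.assoc sc_comm)
lemma sc_ll: "sc a * (sc b * y) = sc (a * b) * y"
  by (metis mult.assoc sc_mult)

lemmas scs = sc_rc sc_lc sc_ll sc_mult sc_add sc_diff sc_uminus

lemma word_eval_plus: "word_eval f (u + w) = word_eval f u * word_eval f w"
  by (cases u; cases w) auto

lemma word_eval_zero: "word_eval f 0 = 1" by (simp add: zero_fword_def)

lemma hom_ext_superset:
  assumes "finite A" "Poly_Mapping.keys x \<subseteq> A"
  shows "hom_ext f x = (\<Sum>w\<in>A. sc (Poly_Mapping.lookup x w) * word_eval f w)"
  unfolding hom_ext_def
  by (rule sum.mono_neutral_left) (use assms in \<open>auto simp: in_keys_iff\<close>)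

lemma hom_ext_0[simp]: "hom_ext f 0 = 0" by (simp add: hom_ext_def)

lemma hom_ext_add: "hom_ext f (x + y) = hom_ext f x + hom_ext f y"
proof -
  let ?A = "Poly_Mapping.keys x \<union> Poly_Mapping.keys y"
  have "hom_ext f (x + y) = (\<Sum>w\<in>?A. sc (Poly_Mapping.lookup (x+y) w) * word_eval f w)"
    by (rule hom_ext_superset) (auto simp: keys_add)
  also have "\<dots> = (\<Sum>w\<in>?A. sc (Poly_Mapping.lookup x w) * word_eval f w)
                 + (\<Sum>w\<in>?A. sc (Poly_Mapping.lookup y w) * word_eval f w)"
    by (simp add: lookup_add sc_add distrib_right sum.distrib)
  also have "\<dots> = hom_ext f x + hom_ext f y"
    by (simp add: hom_ext_superset[symmetric])
  finally show ?thesis .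
qed

lemma hom_ext_sum: "hom_ext f (sum h A) = (\<Sum>a\<in>A. hom_ext f (h a))"
  by (induct A rule: infinite_finite_induct) (auto simp: hom_ext_add)

lemma hom_ext_single: "hom_ext f (Poly_Mapping.single w c) = sc c * word_eval f w"
  by (cases "c = 0") (auto simp: hom_ext_def)

lemma hom_ext_mult: "hom_ext f (x * y) = hom_ext f x * hom_ext f y"
proof -
  have "x * y = (\<Sum>u\<in>Poly_Mapping.keys x. Poly_Mapping.single u (Poly_Mapping.lookup x u))
              * (\<Sum>w\<in>Poly_Mapping.keys y. Poly_Mapping.single w (Poly_Mapping.lookup y w))"
    by (rule arg_cong2[where f="(*)"]) (rule expand_pm)+
  also have "\<dots> = (\<Sum>u\<in>Poly_Mapping.keys x. \<Sum>w\<in>Poly_Mapping.keys y.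
      Poly_Mapping.single u (Poly_Mapping.lookup x u) * Poly_Mapping.single w (Poly_Mapping.lookup y w))"
    by (simp only: sum_distrib_left sum_distrib_right) (rule sum.swap)
  finally have "hom_ext f (x * y) = (\<Sum>u\<in>Poly_Mapping.keys x. \<Sum>w\<in>Poly_Mapping.keys y.
      sc (Poly_Mapping.lookup x u) * word_eval f u * (sc (Poly_Mapping.lookup y w) * word_eval f w))"
    by (simp add: hom_ext_sum mult_single hom_ext_single word_eval_plus scs mult.assoc)
  also have "\<dots> = hom_ext f x * hom_ext f y"
    by (simp only: hom_ext_def sum_distrib_left sum_distrib_right) (rule sum.swap)
  finally show ?thesis .
qed

lemma hom_ext_sc: "hom_ext f (sc c) = sc c"
  by (simp add: sc_def hom_ext_single word_eval_zero)

lemma hom_ext_1: "hom_ext f 1 = 1"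
  using hom_ext_sc[of f 1] by (simp only: sc_1)

lemma hom_ext_g: "hom_ext f (g x) = f x"
  by (simp add: g_def hom_ext_single)

lemma hom_ext_uminus: "hom_ext f (- x) = - hom_ext f x"
proof -
  have "hom_ext f (-x) + hom_ext f x = hom_ext f (-x + x)" by (rule hom_ext_add[symmetric])
  also have "\<dots> = 0" by (simp only: add.left_inverse hom_ext_0)
  finally show ?thesis by (simp only: eq_neg_iff_add_eq_0)
qed

lemma hom_ext_diff: "hom_ext f (x - y) = hom_ext f x - hom_ext f y"
  by (simp only: diff_conv_add_uminus hom_ext_add hom_ext_uminus)

lemma hom_ext_power: "hom_ext f (x ^ m) = hom_ext f x ^ m"
  by (induct m) (simp_all only: power_0 power_Suc hom_ext_1 hom_ext_mult)

lemma hom_ext_prod_list: "hom_ext f (prod_list xs) = prod_list (map (hom_ext f) xs)"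
  by (induct xs) (simp_all only: prod_list.Nil prod_list.Cons list.map hom_ext_1 hom_ext_mult)

lemmas homs = hom_ext_add hom_ext_mult hom_ext_sc hom_ext_1 hom_ext_g hom_ext_uminus hom_ext_diff hom_ext_power hom_ext_prod_list


definition cg :: "nat \<Rightarrow> alg \<Rightarrow> alg \<Rightarrow> bool" where
  "cg n a b \<longleftrightarrow> a - b \<in> rel_ideal n"

lemma I_mult': "a \<in> rel_ideal n \<Longrightarrow> x * a * y \<in> rel_ideal n" by (rule rel_ideal.mult)
lemma I_left: "a \<in> rel_ideal n \<Longrightarrow> x * a \<in> rel_ideal n" using I_mult'[of a n x 1] by simp
lemma I_right: "a \<in> rel_ideal n \<Longrightarrow> a * y \<in> rel_ideal n" using I_mult'[of a n 1 y] by simp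
lemma I_uminus: "a \<in> rel_ideal n \<Longrightarrow> - a \<in> rel_ideal n" using I_left[of a n "-1"] by simp
lemma I_add: "a \<in> rel_ideal n \<Longrightarrow> b \<in> rel_ideal n \<Longrightarrow> a + b \<in> rel_ideal n" by (rule rel_ideal.add)
lemma I_diff: "a \<in> rel_ideal n \<Longrightarrow> b \<in> rel_ideal n \<Longrightarrow> a - b \<in> rel_ideal n"
  using I_add[OF _ I_uminus, of a n b] by (simp only: diff_conv_add_uminus)
lemma I_0: "0 \<in> rel_ideal n" by (rule rel_ideal.zero)
lemma I_rel: "r \<in> rels n \<Longrightarrow> r \<in> rel_ideal n" by (rule rel_ideal.gen)

lemma cg_refl[simp]: "cg n a a" by (simp add: cg_def I_0)
lemma cg_eq: "a = b \<Longrightarrow> cg n a b" by simp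
lemma cg_sym: "cg n a b \<Longrightarrow> cg n b a" unfolding cg_def using I_uminus by fastforce
lemma cg_trans[trans]: "cg n a b \<Longrightarrow> cg n b c \<Longrightarrow> cg n a c"
  unfolding cg_def using I_add by fastforce
lemma cg_add: "cg n a b \<Longrightarrow> cg n c d \<Longrightarrow> cg n (a + c) (b + d)"
  unfolding cg_def using I_add by (fastforce simp: algebra_simps)
lemma cg_diff: "cg n a b \<Longrightarrow> cg n c d \<Longrightarrow> cg n (a - c) (b - d)"
  unfolding cg_def using I_diff by (fastforce simp: algebra_simps)
lemma cg_uminus: "cg n a b \<Longrightarrow> cg n (- a) (- b)"
  unfolding cg_def using I_uminus by (fastforce simp: algebra_simps)
lemma cg_lmult: "cg n a b \<Longrightarrow> cg n (x * a) (x * b)"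
  unfolding cg_def using I_left by (fastforce simp: algebra_simps)
lemma cg_rmult: "cg n a b \<Longrightarrow> cg n (a * x) (b * x)"
  unfolding cg_def using I_right by (fastforce simp: algebra_simps)
lemma cg_mult: "cg n a b \<Longrightarrow> cg n c d \<Longrightarrow> cg n (a * c) (b * d)"
  by (meson cg_lmult cg_rmult cg_trans)
lemma cg_ctx: "cg n a b \<Longrightarrow> cg n (x * a * y) (x * b * y)"
  by (simp add: cg_lmult cg_rmult)
lemma cg_power: "cg n a b \<Longrightarrow> cg n (a ^ m) (b ^ m)"
  by (induct m) (auto intro: cg_mult)
lemma cg_sum: "(\<And>k. k \<in> A \<Longrightarrow> cg n (f k) (h k)) \<Longrightarrow> cg n (sum f A) (sum h A)"
  by (induct A rule: infinite_finite_induct) (auto intro: cg_add)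
lemma cg_rel: "a - b \<in> rels n \<Longrightarrow> cg n a b" by (simp add: cg_def I_rel)
lemma cg_relz: "a \<in> rels n \<Longrightarrow> cg n a 0" by (simp add: cg_def I_rel)
lemma cg_eq_trans[trans]: "cg n a b \<Longrightarrow> b = c \<Longrightarrow> cg n a c" by simp
lemma eq_cg_trans[trans]: "a = b \<Longrightarrow> cg n b c \<Longrightarrow> cg n a c" by simp

lemma cg_by: "cg n c d \<Longrightarrow> a - b = c - d \<Longrightarrow> cg n a b" by (simp add: cg_def)
lemma cg_z: "cg n a b \<Longrightarrow> cg n (a - b) 0" by (simp add: cg_def)
lemma cg_zI: "cg n (a - b) 0 \<Longrightarrow> cg n a b" by (simp add: cg_def)

lemma part0: "({g x | x. \<not> valid n x}) \<subseteq> rels n"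
  unfolding rels_def by (rule le_supI1, rule le_supI1, rule le_supI1, rule le_supI1, rule le_supI1, rule le_supI1, rule le_supI1, rule le_supI1, rule le_supI1, rule le_supI1, rule le_supI1, rule order_refl)

lemma part1: "((\<Union>i\<in>{1..n}. \<Union>j\<in>{1..n}.
      {Kg i * Kig i - 1, Kig i * Kg i - 1, Kg i * Kg j - Kg j * Kg i,
       Kg i * Kbg j - Kbg j * Kg i,
       Kbg i * Kbg j + Kbg j * Kbg i
         - dl i j (sc 2 * (Kg i ^ 2 - Kig i ^ 2) * sc (1 / (vv ^ 2 - vi ^ 2)))})) \<subseteq> rels n"
  unfolding rels_def by (rule le_supI1, rule le_supI1, rule le_supI1, rule le_supI1, rule le_supI1, rule le_supI1, rule le_supI1, rule le_supI1, rule le_supI1, rule le_supI1, rule le_supI2, rule order_refl)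

lemma part2: "((\<Union>i\<in>{1..n}. \<Union>j\<in>{1..<n}.
      {Kg i * Eg j - sc (vpow (pair i j)) * Eg j * Kg i,
       Kg i * Ebg j - sc (vpow (pair i j)) * Ebg j * Kg i,
       Kg i * Fg j - sc (vpow (- pair i j)) * Fg j * Kg i,
       Kg i * Fbg j - sc (vpow (- pair i j)) * Fbg j * Kg i})) \<subseteq> rels n"
  unfolding rels_def by (rule le_supI1, rule le_supI1, rule le_supI1, rule le_supI1, rule le_supI1, rule le_supI1, rule le_supI1, rule le_supI1, rule le_supI1, rule le_supI2, rule order_refl)

lemma part3: "((\<Union>i\<in>{1..<n}.
      {Kbg i * Eg i - sc vv * Eg i * Kbg i - Ebg i * Kig i,
       Kbg i * Fg i - sc vv * Fg i * Kbg i + Fbg i * Kg i,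
       Kbg i * Ebg i + sc vv * Ebg i * Kbg i - Eg i * Kig i,
       Kbg i * Fbg i + sc vv * Fbg i * Kbg i - Fg i * Kg i})) \<subseteq> rels n"
  unfolding rels_def by (rule le_supI1, rule le_supI1, rule le_supI1, rule le_supI1, rule le_supI1, rule le_supI1, rule le_supI1, rule le_supI1, rule le_supI2, rule order_refl)

lemma part4: "((\<Union>i\<in>{2..n}.
      {sc vv * Kbg i * Eg (i - 1) - Eg (i - 1) * Kbg i + Kig i * Ebg (i - 1),
       sc vv * Kbg i * Fg (i - 1) - Fg (i - 1) * Kbg i - Kg i * Fbg (i - 1),
       sc vv * Kbg i * Ebg (i - 1) + Ebg (i - 1) * Kbg i - Kig i * Eg (i - 1),
       sc vv * Kbg i * Fbg (i - 1) + Fbg (i - 1) * Kbg i - Kg i * Fg (i - 1)})) \<subseteq> rels n"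
  unfolding rels_def by (rule le_supI1, rule le_supI1, rule le_supI1, rule le_supI1, rule le_supI1, rule le_supI1, rule le_supI1, rule le_supI2, rule order_refl)

lemma part5: "((\<Union>i\<in>{1..n}. \<Union>j\<in>{j. 1 \<le> j \<and> j < n \<and> j \<noteq> i \<and> j + 1 \<noteq> i}.
      {Kbg i * Eg j - Eg j * Kbg i, Kbg i * Fg j - Fg j * Kbg i,
       Kbg i * Ebg j + Ebg j * Kbg i, Kbg i * Fbg j + Fbg j * Kbg i})) \<subseteq> rels n"
  unfolding rels_def by (rule le_supI1, rule le_supI1, rule le_supI1, rule le_supI1, rule le_supI1, rule le_supI1, rule le_supI2, rule order_refl)

lemma part6: "((\<Union>i\<in>{1..<n}. \<Union>j\<in>{1..<n}.
      {Eg i * Fg j - Fg j * Eg i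
         - dl i j ((Kg i * Kig (i + 1) - Kig i * Kg (i + 1)) * sc (1 / (vv - vi))),
       Ebg i * Fbg j + Fbg j * Ebg i
         - dl i j ((Kg i * Kg (i + 1) - Kig i * Kig (i + 1)) * sc (1 / (vv - vi))
                   + sc (vv - vi) * Kbg i * Kbg (i + 1)),
       Eg i * Fbg j - Fbg j * Eg i - dl i j (Kig (i + 1) * Kbg i - Kbg (i + 1) * Kig i),
       Ebg i * Fg j - Fg j * Ebg i - dl i j (Kg (i + 1) * Kbg i - Kbg (i + 1) * Kg i)})) \<subseteq> rels n"
  unfolding rels_def by (rule le_supI1, rule le_supI1, rule le_supI1, rule le_supI1, rule le_supI1, rule le_supI2, rule order_refl)

lemma part7: "((\<Union>i\<in>{1..<n}.
      {Ebg i ^ 2 + sc ((vv - vi) / (vv + vi)) * Eg i ^ 2,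
       Fbg i ^ 2 - sc ((vv - vi) / (vv + vi)) * Fg i ^ 2})) \<subseteq> rels n"
  unfolding rels_def by (rule le_supI1, rule le_supI1, rule le_supI1, rule le_supI1, rule le_supI2, rule order_refl)

lemma part8: "((\<Union>i\<in>{1..<n}. \<Union>j\<in>{j. 1 \<le> j \<and> j < n \<and> i + 1 \<noteq> j \<and> j + 1 \<noteq> i}.
      {Eg i * Ebg j - Ebg j * Eg i, Fg i * Fbg j - Fbg j * Fg i})) \<subseteq> rels n"
  unfolding rels_def by (rule le_supI1, rule le_supI1, rule le_supI1, rule le_supI2, rule order_refl)

lemma part9: "((\<Union>i\<in>{1..<n}. \<Union>j\<in>{j. 1 \<le> j \<and> j < n \<and> (i + 1 < j \<or> j + 1 < i)}.
      {Eg i * Eg j - Eg j * Eg i, Fg i * Fg j - Fg j * Fg i,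
       Ebg i * Ebg j + Ebg j * Ebg i, Fbg i * Fbg j + Fbg j * Fbg i})) \<subseteq> rels n"
  unfolding rels_def by (rule le_supI1, rule le_supI1, rule le_supI2, rule order_refl)

lemma part10: "((\<Union>i\<in>{i. 1 \<le> i \<and> i + 1 < n}.
      {Eg i * Eg (i + 1) - sc vv * Eg (i + 1) * Eg i
         - (Ebg i * Ebg (i + 1) + sc vv * Ebg (i + 1) * Ebg i),
       Eg i * Ebg (i + 1) - sc vv * Ebg (i + 1) * Eg i
         - (Ebg i * Eg (i + 1) - sc vv * Eg (i + 1) * Ebg i),
       Fg i * Fg (i + 1) - sc vv * Fg (i + 1) * Fg i
         + (Fbg i * Fbg (i + 1) + sc vv * Fbg (i + 1) * Fbg i),
       Fg i * Fbg (i + 1) - sc vv * Fbg (i + 1) * Fg i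
         - (Fbg i * Fg (i + 1) - sc vv * Fg (i + 1) * Fbg i)})) \<subseteq> rels n"
  unfolding rels_def by (rule le_supI1, rule le_supI2, rule order_refl)

lemma part11: "((\<Union>i\<in>{1..<n}. \<Union>j\<in>{j. 1 \<le> j \<and> j < n \<and> (i + 1 = j \<or> j + 1 = i)}.
      (\<Union>X\<in>{Eg j, Ebg j}. {Eg i ^ 2 * X - sc (vv + vi) * Eg i * X * Eg i + X * Eg i ^ 2})
    \<union> (\<Union>Y\<in>{Fg j, Fbg j}. {Fg i ^ 2 * Y - sc (vv + vi) * Fg i * Y * Fg i + Y * Fg i ^ 2}))) \<subseteq> rels n"
  unfolding rels_def by (rule le_supI2, rule order_refl)

lemma rK1: "k \<in> {1..n} \<Longrightarrow> cg n (Kg k * Kig k) 1"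
  by (rule cg_rel, rule subsetD[OF part1], rule UN_I[of k], assumption, rule UN_I[of k], assumption, rule insertI1)
lemma rK2: "k \<in> {1..n} \<Longrightarrow> cg n (Kig k * Kg k) 1"
  by (rule cg_rel, rule subsetD[OF part1], rule UN_I[of k], assumption, rule UN_I[of k], assumption, rule insertI2, rule insertI1)
lemma rKK: "k \<in> {1..n} \<Longrightarrow> l \<in> {1..n} \<Longrightarrow> cg n (Kg k * Kg l) (Kg l * Kg k)"
  by (rule cg_rel, rule subsetD[OF part1], rule UN_I[of k], assumption, rule UN_I[of l], assumption, rule insertI2, rule insertI2, rule insertI1)
lemma rKE: "k \<in> {1..n} \<Longrightarrow> j \<in> {1..<n} \<Longrightarrow> cg n (Kg k * Eg j) (sc (vpow (pair k j)) * Eg j * Kg k)"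
  by (rule cg_rel, rule subsetD[OF part2], rule UN_I[of k], assumption, rule UN_I[of j], assumption, rule insertI1)
lemma rKF: "k \<in> {1..n} \<Longrightarrow> j \<in> {1..<n} \<Longrightarrow> cg n (Kg k * Fg j) (sc (vpow (- pair k j)) * Fg j * Kg k)"
  by (rule cg_rel, rule subsetD[OF part2], rule UN_I[of k], assumption, rule UN_I[of j], assumption, rule insertI2, rule insertI2, rule insertI1)
lemma rKbE: "j \<in> {1..<n} \<Longrightarrow> cg n (Kbg j * Eg j - sc vv * Eg j * Kbg j - Ebg j * Kig j) 0"
  by (rule cg_relz, rule subsetD[OF part3], rule UN_I[of j], assumption, rule insertI1)
lemma rKbF: "j \<in> {1..<n} \<Longrightarrow> cg n (Kbg j * Fg j - sc vv * Fg j * Kbg j + Fbg j * Kg j) 0"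
  by (rule cg_relz, rule subsetD[OF part3], rule UN_I[of j], assumption, rule insertI2, rule insertI1)
lemma rEF: "k \<in> {1..<n} \<Longrightarrow> j \<in> {1..<n} \<Longrightarrow> cg n (Eg k * Fg j - Fg j * Eg k
         - dl k j ((Kg k * Kig (k + 1) - Kig k * Kg (k + 1)) * sc (1 / (vv - vi)))) 0"
  by (rule cg_relz, rule subsetD[OF part6], rule UN_I[of k], assumption, rule UN_I[of j], assumption, rule insertI1)
lemma rSE: "k \<in> {1..<n} \<Longrightarrow> j \<in> {1..<n} \<Longrightarrow> k + 1 = j \<or> j + 1 = k \<Longrightarrow>
   cg n (Eg k ^ 2 * Eg j - sc (vv + vi) * Eg k * Eg j * Eg k + Eg j * Eg k ^ 2) 0"
  by (rule cg_relz, rule subsetD[OF part11], rule UN_I[of k], assumption, rule UN_I[of j], simp, rule UnI1, rule UN_I[of "Eg j"], simp, rule insertI1)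
lemma rSF: "k \<in> {1..<n} \<Longrightarrow> j \<in> {1..<n} \<Longrightarrow> k + 1 = j \<or> j + 1 = k \<Longrightarrow>
   cg n (Fg k ^ 2 * Fg j - sc (vv + vi) * Fg k * Fg j * Fg k + Fg j * Fg k ^ 2) 0"
  by (rule cg_relz, rule subsetD[OF part11], rule UN_I[of k], assumption, rule UN_I[of j], simp, rule UnI2, rule UN_I[of "Fg j"], simp, rule insertI1)


lemma vv_pow_ne1: "k > 0 \<Longrightarrow> vv ^ k \<noteq> 1"
proof
  assume k: "k > 0" and h: "vv ^ k = 1"
  have "vv ^ k = Fract ([:0, 1:] ^ k) 1" unfolding vv_def by (induct k) (simp_all add: mult_fract One_fract_def)
  then have h2: "Fract (([:0, 1:]::rat poly) ^ k) 1 = 1" using h by simp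
  have "Fract (([:0, 1:]::rat poly) ^ k) 1 = Fract 1 1" by (subst One_fract_def[symmetric]) (rule h2)
  then have "([:0, 1:] :: rat poly) ^ k = 1" by (simp add: eq_fract)
  then have "degree (([:0, 1:] :: rat poly) ^ k) = 0" by simp
  moreover have "degree (([:0, 1:] :: rat poly) ^ k) = k" by (simp add: degree_power_eq)
  ultimately show False using k by simp
qed

lemma vi_nz[simp]: "vi \<noteq> 0" by simp

lemma vv_vi_ne: "vv - vi \<noteq> 0"
proof
  assume "vv - vi = 0"
  then have "vv * vv = vi * vv" by simp
  then have "vv ^ 2 = 1" by (simp add: power2_eq_square)
  then show False using vv_pow_ne1[of 2] by simp
qed

definition qset :: "qv set" where "qset = {vv, vi}"

lemma qset_nz: "q \<in> qset \<Longrightarrow> q \<noteq> 0" by (auto simp: qset_def)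
lemma qset_inv: "q \<in> qset \<Longrightarrow> inverse q \<in> qset" by (auto simp: qset_def)
lemma qset_ne: "q \<in> qset \<Longrightarrow> q - inverse q \<noteq> 0"
  using vv_vi_ne by (auto simp: qset_def)

lemma qint_q: "q \<in> qset \<Longrightarrow> qint m = (q ^ m - inverse q ^ m) / (q - inverse q)"
  unfolding qset_def qint_def
proof (elim insertE)
  assume "q = vi"
  then have "(q ^ m - inverse q ^ m) / (q - inverse q) = (- (vv ^ m - vi ^ m)) / (- (vv - vi))"
    by simp
  also have "\<dots> = (vv ^ m - vi ^ m) / (vv - vi)" by (rule minus_divide_divide)
  finally show "(vv ^ m - vi ^ m) / (vv - vi) = (q ^ m - inverse q ^ m) / (q - inverse q)" by simp
qed (auto)

lemma qint_0[simp]: "qint 0 = 0" by (simp add: qint_def)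
lemma qint_1[simp]: "qint (Suc 0) = 1" using vv_vi_ne by (simp add: qint_def)

lemma qint_nz: "m > 0 \<Longrightarrow> qint m \<noteq> 0"
proof
  assume m: "m > 0" and h: "qint m = 0"
  then have "vv ^ m - vi ^ m = 0" using vv_vi_ne by (simp add: qint_def)
  then have "vv ^ m * vv ^ m = vi ^ m * vv ^ m" by simp
  also have "vi ^ m * vv ^ m = 1" by (simp add: power_mult_distrib[symmetric])
  finally have "vv ^ (2 * m) = 1" by (simp only: mult_2 power_add)
  then show False using vv_pow_ne1[of "2 * m"] m by simp
qed

lemma qfact_0[simp]: "qfact 0 = 1" by (simp add: qfact_def)
lemma qfact_Suc: "qfact (Suc m) = qint (Suc m) * qfact m"
  unfolding qfact_def by (simp add: prod.nat_ivl_Suc' mult.commute)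
lemma qfact_nz: "qfact m \<noteq> 0"
  by (induct m) (auto simp: qfact_Suc qint_nz)
lemma qfact_1[simp]: "qfact (Suc 0) = 1" by (simp add: qfact_def)

lemma qident0: "(d::qv) \<noteq> 0 \<Longrightarrow> q ^ k * ((q ^ m - y ^ m) / d) + y ^ m * ((q ^ k - y ^ k) / d) = (q ^ (m + k) - y ^ (m + k)) / d"
  by (simp add: divide_simps power_add algebra_simps)

lemma qident: "q \<in> qset \<Longrightarrow> q ^ k * qint m + inverse q ^ m * qint k = qint (m + k)"
proof -
  assume q: "q \<in> qset"
  have ne: "q - inverse q \<noteq> 0" using qset_ne[OF q] .
  show ?thesis unfolding qint_q[OF q] using qident0[OF ne] .
qed

lemma Zset_vv_pow: "vv ^ k \<in> Zset"
proof -
  have "vv ^ k = Fract ([:0, 1:] ^ k) 1" unfolding vv_def by (induct k) (simp_all add: mult_fract One_fract_def)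
  also have "\<dots> = Fract (map_poly of_int (monom 1 k)) 1 / vv ^ 0"
  proof -
    have "map_poly of_int (monom (1::int) k) = (monom 1 k :: rat poly)" by (simp add: map_poly_monom)
    also have "\<dots> = [:0, 1:] ^ k" by (simp add: monom_altdef)
    finally show ?thesis by simp
  qed
  finally show ?thesis unfolding Zset_def by blast
qed

lemma Zset_vi_pow: "vi ^ k \<in> Zset"
proof -
  have "vi ^ k = Fract (map_poly of_int 1) 1 / vv ^ k" by (simp add: One_fract_def[symmetric] power_inverse divide_inverse)
  then show ?thesis unfolding Zset_def by blast
qed

lemma Zset_m1: "-1 \<in> Zset"
proof -
  have "map_poly of_int (monom (-1::int) 0) = (monom (-1) 0 :: rat poly)" by (simp add: map_poly_monom)
  also have "\<dots> = - 1" by (simp add: monom_0 one_pCons)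
  finally have "(-1::qv) = Fract (map_poly of_int (monom (-1) 0)) 1 / vv ^ 0"
    by (simp add: One_fract_def)
  then show ?thesis unfolding Zset_def by blast
qed

lemma Zset_0: "0 \<in> Zset"
proof -
  have "(0::qv) = Fract (map_poly of_int 0) 1 / vv ^ 0" by (simp add: Zero_fract_def)
  then show ?thesis unfolding Zset_def by blast
qed

lemma Zset_1: "1 \<in> Zset" using Zset_vv_pow[of 0] by simp
lemma Zset_vv: "vv \<in> Zset" using Zset_vv_pow[of 1] by simp
lemma Zset_vi: "vi \<in> Zset" using Zset_vi_pow[of 1] by simp
lemma Zset_qpow: "q \<in> qset \<Longrightarrow> q ^ k \<in> Zset"
  by (auto simp: qset_def Zset_vv_pow Zset_vi_pow)


definition D :: "alg \<Rightarrow> nat \<Rightarrow> alg" where "D Y m = sc (1 / qfact m) * Y ^ m"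

lemma D_0[simp]: "D Y 0 = 1" by (simp add: D_def)
lemma D_1[simp]: "D Y (Suc 0) = Y" by (simp add: D_def)

lemma D_left: "Y * D Y m = sc (qint (Suc m)) * D Y (Suc m)"
proof -
  have "sc (qint (Suc m)) * D Y (Suc m) = sc (qint (Suc m) * (1 / qfact (Suc m))) * (Y * Y ^ m)"
    by (simp add: D_def sc_ll)
  also have "qint (Suc m) * (1 / qfact (Suc m)) = 1 / qfact m"
    using qint_nz[of "Suc m"] qfact_nz[of m] by (simp add: qfact_Suc)
  finally show ?thesis by (simp add: D_def scs)
qed

lemma D_right: "D Y m * Y = sc (qint (Suc m)) * D Y (Suc m)"
proof -
  have "D Y m * Y = Y * D Y m" unfolding D_def mult.assoc power_commutes by (simp only: sc_comm mult.assoc)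
  then show ?thesis by (simp add: D_left)
qed

lemma D_Suc: "D Y (Suc m) = sc (1 / qint (Suc m)) * (Y * D Y m)"
  using qint_nz[of "Suc m"] by (simp add: D_left scs)

lemma D_sc: "D (sc c * Y) m = sc (c ^ m) * D Y m"
proof -
  have "(sc c * Y) ^ m = sc (c ^ m) * Y ^ m"
    by (induct m) (simp_all add: scs mult.assoc)
  then show ?thesis by (simp add: D_def scs mult.commute)
qed

lemma D_neg: "D (- Y) m = sc ((-1) ^ m) * D Y m"
  using D_sc[of "-1" Y m] by (simp add: sc_uminus)

lemma qc_pow: "cg n (P * Y) (sc c * (Y * P)) \<Longrightarrow> cg n (P * Y ^ k) (sc (c ^ k) * (Y ^ k * P))"
proof (induct k)
  case 0 then show ?case by simp
next
  case (Suc k)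
  have "P * Y ^ Suc k = (P * Y ^ k) * Y" by (simp only: power_Suc2 mult.assoc)
  also have "cg n \<dots> (sc (c ^ k) * (Y ^ k * P) * Y)" by (rule cg_rmult[OF Suc(1)[OF Suc(2)]])
  also have "\<dots> = sc (c ^ k) * (Y ^ k * (P * Y))" by (simp add: mult.assoc)
  also have "cg n \<dots> (sc (c ^ k) * (Y ^ k * (sc c * (Y * P))))" by (intro cg_lmult Suc(2))
  also have "\<dots> = sc (c ^ Suc k) * (Y ^ Suc k * P)" by (simp add: scs power_Suc2 mult.assoc mult.commute) (simp add: mult.assoc[symmetric] power_commutes)
  finally show ?case .
qed

lemma qc_D: "cg n (P * Y) (sc c * (Y * P)) \<Longrightarrow> cg n (P * D Y k) (sc (c ^ k) * (D Y k * P))"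
proof -
  assume h: "cg n (P * Y) (sc c * (Y * P))"
  have "P * D Y k = sc (1 / qfact k) * (P * Y ^ k)" by (simp add: D_def scs)
  also have "cg n \<dots> (sc (1 / qfact k) * (sc (c ^ k) * (Y ^ k * P)))" by (intro cg_lmult qc_pow h)
  also have "\<dots> = sc (c ^ k) * (D Y k * P)" by (simp add: D_def scs mult.commute mult.assoc)
  finally show ?thesis .
qed


definition zclosed :: "nat \<Rightarrow> alg set \<Rightarrow> bool" where
  "zclosed n C \<longleftrightarrow> 1 \<in> C \<and> (\<forall>x\<in>C. \<forall>y\<in>C. x + y \<in> C \<and> x * y \<in> C)
     \<and> (\<forall>c\<in>Zset. \<forall>x\<in>C. sc c * x \<in> C) \<and> (\<forall>x\<in>C. \<forall>y. cg n x y \<longrightarrow> y \<in> C)"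

lemma zc_1: "zclosed n C \<Longrightarrow> 1 \<in> C" by (simp add: zclosed_def)
lemma zc_add: "zclosed n C \<Longrightarrow> x \<in> C \<Longrightarrow> y \<in> C \<Longrightarrow> x + y \<in> C" by (simp add: zclosed_def)
lemma zc_mult: "zclosed n C \<Longrightarrow> x \<in> C \<Longrightarrow> y \<in> C \<Longrightarrow> x * y \<in> C" by (simp add: zclosed_def)
lemma zc_sc: "zclosed n C \<Longrightarrow> c \<in> Zset \<Longrightarrow> x \<in> C \<Longrightarrow> sc c * x \<in> C" by (simp add: zclosed_def)
lemma zc_cg: "zclosed n C \<Longrightarrow> x \<in> C \<Longrightarrow> cg n x y \<Longrightarrow> y \<in> C" by (simp add: zclosed_def)
lemma zc_0: "zclosed n C \<Longrightarrow> 0 \<in> C" using zc_sc[OF _ Zset_0 zc_1] by simp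
lemma zc_uminus: "zclosed n C \<Longrightarrow> x \<in> C \<Longrightarrow> - x \<in> C" using zc_sc[OF _ Zset_m1] by (simp add: sc_uminus)
lemma zc_diff: "zclosed n C \<Longrightarrow> x \<in> C \<Longrightarrow> y \<in> C \<Longrightarrow> x - y \<in> C"
  using zc_add[OF _ _ zc_uminus] by (simp only: diff_conv_add_uminus)
lemma zc_sum: "zclosed n C \<Longrightarrow> (\<And>k. k \<in> A \<Longrightarrow> f k \<in> C) \<Longrightarrow> sum f A \<in> C"
  by (induct A rule: infinite_finite_induct) (auto intro: zc_add zc_0)
lemma zc_vpow: "zclosed n C \<Longrightarrow> q \<in> qset \<Longrightarrow> x \<in> C \<Longrightarrow> sc (q ^ k) * x \<in> C"
  by (rule zc_sc) (auto intro: Zset_qpow)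


context
  fixes n :: nat and q :: qv and A B W :: alg
  assumes q: "q \<in> qset"
    and hAB: "cg n (A * B) (sc (inverse q) * (B * A) + W)"
    and hAW: "cg n (A * W) (sc q * (W * A))"
    and hWB: "cg n (W * B) (sc q * (B * W))"
begin

lemma SL: "cg n (A * B ^ Suc b) (sc (inverse q ^ Suc b) * (B ^ Suc b * A) + sc (qint (Suc b)) * (B ^ b * W))"
proof (induct b)
  case 0 then show ?case using hAB by simp
next
  case (Suc b)
  let ?qi = "inverse q"
  have "A * B ^ Suc (Suc b) = (A * B ^ Suc b) * B" by (simp only: power_Suc2 mult.assoc)
  also have "cg n \<dots> ((sc (?qi ^ Suc b) * (B ^ Suc b * A) + sc (qint (Suc b)) * (B ^ b * W)) * B)"
    by (rule cg_rmult[OF Suc])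
  also have "\<dots> = sc (?qi ^ Suc b) * (B ^ Suc b * (A * B)) + sc (qint (Suc b)) * (B ^ b * (W * B))"
    by (simp add: algebra_simps)
  also have "cg n \<dots> (sc (?qi ^ Suc b) * (B ^ Suc b * (sc ?qi * (B * A) + W)) + sc (qint (Suc b)) * (B ^ b * (sc q * (B * W))))"
    by (intro cg_add cg_lmult hAB hWB)
  also have "\<dots> = sc (?qi ^ Suc (Suc b)) * (B ^ Suc (Suc b) * A) + (sc (?qi ^ Suc b) + sc (q * qint (Suc b))) * (B ^ Suc b * W)"
    by (simp add: algebra_simps scs power_Suc2 mult.commute) (simp add: mult.assoc[symmetric] power_commutes)
  also have "sc (?qi ^ Suc b) + sc (q * qint (Suc b)) = sc (qint (Suc (Suc b)))"
    using qident[OF q, of 1 "Suc b"] by (simp add: sc_add[symmetric] add.commute)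
  finally show ?case .
qed

lemma SLD: "cg n (A * D B (Suc b)) (sc (inverse q ^ Suc b) * (D B (Suc b) * A) + D B b * W)"
proof -
  have "A * D B (Suc b) = sc (1 / qfact (Suc b)) * (A * B ^ Suc b)" by (simp add: D_def scs)
  also have "cg n \<dots> (sc (1 / qfact (Suc b)) * (sc (inverse q ^ Suc b) * (B ^ Suc b * A) + sc (qint (Suc b)) * (B ^ b * W)))"
    by (intro cg_lmult SL)
  also have "\<dots> = sc (inverse q ^ Suc b) * (D B (Suc b) * A) + sc (qint (Suc b) * (1 / qfact (Suc b))) * (B ^ b * W)"
    by (simp add: D_def algebra_simps scs mult.commute)
  also have "qint (Suc b) * (1 / qfact (Suc b)) = 1 / qfact b"
    using qint_nz[of "Suc b"] qfact_nz[of b] by (simp add: qfact_Suc)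
  finally show ?thesis by (simp add: D_def scs mult.assoc)
qed

lemma AWD: "cg n (A * D W k) (sc (q ^ k) * (D W k * A))"
  by (rule qc_D[OF hAW])

definition MM :: "nat \<Rightarrow> nat \<Rightarrow> nat \<Rightarrow> alg" where
  "MM a b k = D B (b - k) * (D W k * D A (Suc a - k))"

lemma termk:
  assumes ka: "k \<le> a" and ab: "a < b"
  shows "cg n (A * (D B (b - k) * (D W k * D A (a - k))))
     (sc (inverse q ^ (b - k) * q ^ k * qint (Suc a - k)) * MM a b k + sc (qint (Suc k)) * MM a b (Suc k))"
proof -
  obtain r where r: "b - k = Suc r" using ka ab by (metis Suc_diff_Suc le_less_trans)
  have r2: "b - Suc k = r" using r by simp
  have a1: "Suc (a - k) = Suc a - k" using ka by simp
  have a2: "a - k = Suc a - Suc k" by simp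
  let ?R = "D W k * D A (a - k)"
  have "A * (D B (b - k) * ?R) = (A * D B (Suc r)) * ?R" by (simp add: r mult.assoc)
  also have "cg n \<dots> ((sc (inverse q ^ Suc r) * (D B (Suc r) * A) + D B r * W) * ?R)"
    by (intro cg_rmult SLD)
  also have "\<dots> = sc (inverse q ^ Suc r) * (D B (Suc r) * ((A * D W k) * D A (a - k))) + D B r * ((W * D W k) * D A (a - k))"
    by (simp add: algebra_simps)
  also have "cg n \<dots> (sc (inverse q ^ Suc r) * (D B (Suc r) * ((sc (q ^ k) * (D W k * A)) * D A (a - k))) + D B r * ((W * D W k) * D A (a - k)))"
    by (intro cg_add cg_lmult cg_rmult AWD cg_refl)
  also have "\<dots> = sc (inverse q ^ Suc r * q ^ k) * (D B (Suc r) * (D W k * (A * D A (a - k)))) + D B r * ((W * D W k) * D A (a - k))"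
    by (simp add: scs mult.assoc)
  also have "\<dots> = sc (inverse q ^ Suc r * q ^ k * qint (Suc (a - k))) * (D B (Suc r) * (D W k * D A (Suc (a - k)))) + sc (qint (Suc k)) * (D B r * (D W (Suc k) * D A (a - k)))"
    by (simp add: D_left scs mult.assoc)
  also have "\<dots> = sc (inverse q ^ (b - k) * q ^ k * qint (Suc a - k)) * MM a b k + sc (qint (Suc k)) * MM a b (Suc k)"
    unfolding MM_def r r2 a1[symmetric] a2[symmetric] ..
  finally show ?thesis .
qed

lemma coef:
  assumes k: "k \<le> Suc a" and ab: "Suc a \<le> b"
  shows "(inverse q ^ ((a - k) * (b - k)) * (inverse q ^ (b - k) * q ^ k * qint (Suc a - k))
          + (if k = 0 then 0 else inverse q ^ ((a - (k - 1)) * (b - (k - 1))) * qint (Suc (k - 1)))) / qint (Suc a)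
        = inverse q ^ ((Suc a - k) * (b - k))"
proof (cases k)
  case 0
  have "inverse q ^ (a * b) * (inverse q ^ b * qint (Suc a)) / qint (Suc a) = inverse q ^ (a * b) * inverse q ^ b"
    using qint_nz[of "Suc a"] by simp
  also have "\<dots> = inverse q ^ (Suc a * b)" by (simp add: power_add[symmetric] add.commute)
  finally show ?thesis using 0 by simp
next
  case (Suc j)
  define m where "m = a - j"
  define b' where "b' = b - Suc j"
  have jm: "m + Suc j = Suc a" using k Suc by (simp add: m_def)
  have e1: "a - k = m - 1" using Suc by (simp add: m_def)
  have e2: "b - k = b'" using Suc by (simp add: b'_def)
  have e3: "Suc a - k = m" using Suc k by (simp add: m_def)
  have e4: "a - (k - 1) = m" using Suc by (simp add: m_def)
  have e5: "b - (k - 1) = Suc b'" using Suc ab k by (simp add: b'_def)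
  have cA: "inverse q ^ ((m - 1) * b') * inverse q ^ b' * qint m = inverse q ^ (m * b') * qint m"
  proof (cases m)
    case 0 then show ?thesis by simp
  next
    case (Suc m') then show ?thesis by (simp add: power_add[symmetric] add.commute)
  qed
  have cB: "inverse q ^ (m * Suc b') = inverse q ^ (m * b') * inverse q ^ m"
    by (simp add: power_add[symmetric] add.commute)
  have "inverse q ^ ((a - k) * (b - k)) * (inverse q ^ (b - k) * q ^ k * qint (Suc a - k))
          + inverse q ^ ((a - (k - 1)) * (b - (k - 1))) * qint (Suc (k - 1))
      = (inverse q ^ ((m - 1) * b') * inverse q ^ b' * qint m) * q ^ k
          + inverse q ^ (m * Suc b') * qint k"
    unfolding e1 e2 e3 e4 e5 using Suc by (simp add: algebra_simps)
  also have "\<dots> = inverse q ^ (m * b') * (q ^ k * qint m + inverse q ^ m * qint k)"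
    unfolding cA cB by (simp add: algebra_simps)
  also have "q ^ k * qint m + inverse q ^ m * qint k = qint (Suc a)"
    using qident[OF q, of k m] jm Suc by simp
  finally show ?thesis using Suc qint_nz[of "Suc a"] e3 e2 by simp
qed

lemma MI: "a \<le> b \<Longrightarrow> cg n (D A a * D B b)
   (\<Sum>k\<le>a. sc (inverse q ^ ((a - k) * (b - k))) * (D B (b - k) * (D W k * D A (a - k))))"
proof (induct a)
  case 0 then show ?case by simp
next
  case (Suc a)
  have ab: "a < b" using Suc(2) by simp
  define c where "c k = inverse q ^ ((a - k) * (b - k))" for k
  define \<alpha> where "\<alpha> k = inverse q ^ (b - k) * q ^ k * qint (Suc a - k)" for k
  define \<beta> where "\<beta> k = qint (Suc k)" for k
  define T where "T k = D B (b - k) * (D W k * D A (a - k))" for k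
  define M where "M k = MM a b k" for k
  define s where "s = 1 / qint (Suc a)"
  have "D A (Suc a) * D B b = sc s * (A * (D A a * D B b))" by (simp add: D_Suc mult.assoc scs s_def)
  also have "cg n \<dots> (sc s * (A * (\<Sum>k\<le>a. sc (c k) * T k)))"
    unfolding c_def T_def using Suc ab by (intro cg_lmult) simp
  also have "\<dots> = sc s * (\<Sum>k\<le>a. sc (c k) * (A * T k))" by (simp add: sum_distrib_left scs)
  also have "cg n \<dots> (sc s * (\<Sum>k\<le>a. sc (c k) * (sc (\<alpha> k) * M k + sc (\<beta> k) * M (Suc k))))"
    unfolding T_def \<alpha>_def \<beta>_def M_def using ab by (intro cg_lmult cg_sum termk) simp_all
  also have "(\<Sum>k\<le>a. sc (c k) * (sc (\<alpha> k) * M k + sc (\<beta> k) * M (Suc k)))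
      = (\<Sum>k\<le>a. sc (c k * \<alpha> k) * M k) + (\<Sum>k\<le>a. sc (c k * \<beta> k) * M (Suc k))"
    by (simp add: algebra_simps scs sum.distrib)
  also have "(\<Sum>k\<le>a. sc (c k * \<alpha> k) * M k) = (\<Sum>k\<le>Suc a. sc (c k * \<alpha> k) * M k)"
    by (simp add: \<alpha>_def)
  also have "(\<Sum>k\<le>a. sc (c k * \<beta> k) * M (Suc k)) = (\<Sum>k\<le>Suc a. sc (if k = 0 then 0 else c (k - 1) * \<beta> (k - 1)) * M k)"
    by (subst sum.atMost_Suc_shift) simp
  also have "(\<Sum>k\<le>Suc a. sc (c k * \<alpha> k) * M k) + (\<Sum>k\<le>Suc a. sc (if k = 0 then 0 else c (k - 1) * \<beta> (k - 1)) * M k)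
     = (\<Sum>k\<le>Suc a. sc (c k * \<alpha> k + (if k = 0 then 0 else c (k - 1) * \<beta> (k - 1))) * M k)"
    by (simp add: sum.distrib[symmetric] sc_add distrib_right)
  also have "sc s * \<dots> = (\<Sum>k\<le>Suc a. sc ((c k * \<alpha> k + (if k = 0 then 0 else c (k - 1) * \<beta> (k - 1))) / qint (Suc a)) * M k)"
    by (subst sum_distrib_left, rule sum.cong[OF refl], simp add: sc_ll s_def)
  also have "\<dots> = (\<Sum>k\<le>Suc a. sc (inverse q ^ ((Suc a - k) * (b - k))) * M k)"
  proof (rule sum.cong[OF refl])
    fix k assume "k \<in> {..Suc a}"
    then have "k \<le> Suc a" by simp
    from coef[OF this Suc(2)] show "sc ((c k * \<alpha> k + (if k = 0 then 0 else c (k - 1) * \<beta> (k - 1))) / qint (Suc a)) * M k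
       = sc (inverse q ^ ((Suc a - k) * (b - k))) * M k"
      unfolding c_def \<alpha>_def \<beta>_def by simp
  qed
  finally show ?case unfolding M_def MM_def .
qed

lemma W_in:
  assumes C: "zclosed n C" and hA: "\<And>a. D A a \<in> C" and hB: "\<And>b. D B b \<in> C"
  shows "D W m \<in> C"
proof (induct m rule: less_induct)
  case (less m)
  let ?t = "\<lambda>k. sc (inverse q ^ ((m - k) * (m - k))) * (D B (m - k) * (D W k * D A (m - k)))"
  have "cg n (D A m * D B m) (\<Sum>k\<le>m. ?t k)" using MI[of m m] by simp
  also have "(\<Sum>k\<le>m. ?t k) = (\<Sum>k<m. ?t k) + D W m" by (simp add: lessThan_Suc_atMost[symmetric])
  finally have "cg n (D A m * D B m - (\<Sum>k<m. ?t k)) (D W m)"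
    unfolding cg_def by (simp add: algebra_simps)
  moreover have "D A m * D B m - (\<Sum>k<m. ?t k) \<in> C"
    using C hA hB less qset_inv[OF q]
    by (intro zc_diff zc_mult zc_sum zc_vpow) auto
  ultimately show ?case using zc_cg[OF C] by blast
qed

end


lemma serre_AW:
  assumes q: "q \<noteq> 0" and s: "cg n (A ^ 2 * B - sc (q + inverse q) * A * B * A + B * A ^ 2) 0"
  shows "cg n (A * (A * B - sc (inverse q) * (B * A))) (sc q * ((A * B - sc (inverse q) * (B * A)) * A))"
  by (rule cg_by[OF s]) (use q in \<open>simp add: algebra_simps scs power2_eq_square\<close>)

lemma serre_WB:
  assumes q: "q \<noteq> 0" and s: "cg n (B ^ 2 * A - sc (q + inverse q) * B * A * B + A * B ^ 2) 0"
  shows "cg n ((A * B - sc (inverse q) * (B * A)) * B) (sc q * (B * (A * B - sc (inverse q) * (B * A))))"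
  by (rule cg_by[OF s]) (use q in \<open>simp add: algebra_simps scs power2_eq_square\<close>)

lemma W_in_serre:
  assumes q: "q \<in> qset"
    and s1: "cg n (A ^ 2 * B - sc (q + inverse q) * A * B * A + B * A ^ 2) 0"
    and s2: "cg n (B ^ 2 * A - sc (q + inverse q) * B * A * B + A * B ^ 2) 0"
    and C: "zclosed n C" and hA: "\<And>a. D A a \<in> C" and hB: "\<And>b. D B b \<in> C"
  shows "D (A * B - sc (inverse q) * (B * A)) m \<in> C"
  by (rule W_in[OF q _ serre_AW[OF qset_nz[OF q] s1] serre_WB[OF qset_nz[OF q] s2] C hA hB]) simp


lemma Tf_add: "Tfree i (x + y) = Tfree i x + Tfree i y" by (simp add: Tfree_def hom_ext_add)
lemma Tf_mult: "Tfree i (x * y) = Tfree i x * Tfree i y" by (simp add: Tfree_def hom_ext_mult)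
lemma Tf_sc: "Tfree i (sc c) = sc c" by (simp add: Tfree_def hom_ext_sc)
lemma Tf_1: "Tfree i 1 = 1" by (simp only: Tfree_def hom_ext_1)
lemma Tf_g: "Tfree i (g x) = Tg i x" by (simp add: Tfree_def hom_ext_g)
lemma Tf_uminus: "Tfree i (- x) = - Tfree i x" by (simp add: Tfree_def hom_ext_uminus)
lemma Tf_diff: "Tfree i (x - y) = Tfree i x - Tfree i y" by (simp only: Tfree_def hom_ext_diff)
lemma Tf_power: "Tfree i (x ^ m) = Tfree i x ^ m" by (simp only: Tfree_def hom_ext_power)
lemma Tf_prod_list: "Tfree i (prod_list xs) = prod_list (map (Tfree i) xs)"
  by (simp only: Tfree_def hom_ext_prod_list)
lemma Tf_D: "Tfree i (D Y m) = D (Tfree i Y) m" by (simp add: D_def Tf_mult Tf_sc Tf_power)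

lemmas Tfs = Tf_add Tf_mult Tf_sc Tf_1 Tf_g Tf_uminus Tf_diff Tf_power Tf_D

definition MZ :: "nat \<Rightarrow> alg set" where "MZ n = {x + y | x y. x \<in> UZ n \<and> y \<in> rel_ideal n}"
definition SZ :: "nat \<Rightarrow> nat \<Rightarrow> alg set" where "SZ n i = {u. \<exists>x\<in>UZ n. cg n (Tfree i x) u}"

lemma UZ_sc: "c \<in> Zset \<Longrightarrow> a \<in> UZ n \<Longrightarrow> sc c * a \<in> UZ n" unfolding UZ_def by (rule zsubalg.smult)
lemma UZ_add: "a \<in> UZ n \<Longrightarrow> b \<in> UZ n \<Longrightarrow> a + b \<in> UZ n" unfolding UZ_def by (rule zsubalg.add)
lemma UZ_mult: "a \<in> UZ n \<Longrightarrow> b \<in> UZ n \<Longrightarrow> a * b \<in> UZ n" unfolding UZ_def by (rule zsubalg.mult)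
lemma UZ_1: "1 \<in> UZ n" unfolding UZ_def by (rule zsubalg.one)
lemma UZ_gen: "s \<in> UZ_gens n \<Longrightarrow> s \<in> UZ n" unfolding UZ_def by (rule zsubalg.gen)

lemma MZ_UZ: "x \<in> UZ n \<Longrightarrow> x \<in> MZ n"
  unfolding MZ_def by (rule CollectI, rule exI[of _ x], rule exI[of _ 0]) (simp add: I_0)

lemma zclosed_MZ: "zclosed n (MZ n)"
  unfolding zclosed_def
proof (intro conjI ballI allI impI)
  show "1 \<in> MZ n" by (rule MZ_UZ[OF UZ_1])
next
  fix x y assume "x \<in> MZ n" "y \<in> MZ n"
  then obtain x1 y1 x2 y2 where h: "x = x1 + y1" "y = x2 + y2" "x1 \<in> UZ n" "x2 \<in> UZ n"
    "y1 \<in> rel_ideal n" "y2 \<in> rel_ideal n" unfolding MZ_def by blast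
  have "x + y = (x1 + x2) + (y1 + y2)" using h by (simp add: algebra_simps)
  then show "x + y \<in> MZ n" unfolding MZ_def using h by (blast intro: UZ_add I_add)
  have "x * y = (x1 * x2) + (x1 * y2 + y1 * x2 + y1 * y2)" using h by (simp add: algebra_simps)
  then show "x * y \<in> MZ n" unfolding MZ_def using h by (blast intro: UZ_mult I_add I_left I_right)
next
  fix c x assume c: "c \<in> Zset" and "x \<in> MZ n"
  then obtain x1 y1 where h: "x = x1 + y1" "x1 \<in> UZ n" "y1 \<in> rel_ideal n" unfolding MZ_def by blast
  have "sc c * x = sc c * x1 + sc c * y1" using h by (simp add: algebra_simps)
  then show "sc c * x \<in> MZ n" unfolding MZ_def using h c by (blast intro: UZ_sc I_left)
next
  fix x y assume "x \<in> MZ n" and cg: "cg n x y"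
  then obtain x1 y1 where h: "x = x1 + y1" "x1 \<in> UZ n" "y1 \<in> rel_ideal n" unfolding MZ_def by blast
  have "y = x1 + (y1 - (x - y))" using h by simp
  moreover have "y1 - (x - y) \<in> rel_ideal n" using h cg unfolding cg_def by (blast intro: I_diff)
  ultimately show "y \<in> MZ n" unfolding MZ_def using h by blast
qed

lemma zclosed_SZ: "zclosed n (SZ n i)"
  unfolding zclosed_def
proof (intro conjI ballI allI impI)
  have "cg n (Tfree i 1) 1" by (simp only: Tf_1 cg_refl)
  then show "1 \<in> SZ n i" unfolding SZ_def using UZ_1 by blast
next
  fix x y assume "x \<in> SZ n i" "y \<in> SZ n i"
  then obtain a b where h: "a \<in> UZ n" "b \<in> UZ n" "cg n (Tfree i a) x" "cg n (Tfree i b) y"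
    unfolding SZ_def by blast
  have "cg n (Tfree i (a + b)) (x + y)" using h by (simp add: Tf_add cg_add)
  then show "x + y \<in> SZ n i" unfolding SZ_def using h UZ_add by blast
  have "cg n (Tfree i (a * b)) (x * y)" using h by (simp add: Tf_mult cg_mult)
  then show "x * y \<in> SZ n i" unfolding SZ_def using h UZ_mult by blast
next
  fix c x assume c: "c \<in> Zset" and "x \<in> SZ n i"
  then obtain a where h: "a \<in> UZ n" "cg n (Tfree i a) x" unfolding SZ_def by blast
  have "cg n (Tfree i (sc c * a)) (sc c * x)" using h by (simp add: Tf_mult Tf_sc cg_lmult)
  then show "sc c * x \<in> SZ n i" unfolding SZ_def using h c UZ_sc by blast
next
  fix x y assume "x \<in> SZ n i" and cg: "cg n x y"
  then show "y \<in> SZ n i" unfolding SZ_def using cg_trans by blast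
qed

lemma SZ_T: "x \<in> UZ n \<Longrightarrow> Tfree i x \<in> SZ n i" unfolding SZ_def using cg_refl by blast

lemma main_from_gens:
  assumes F: "\<And>s. s \<in> UZ_gens n \<Longrightarrow> Tfree i s \<in> MZ n"
    and R: "\<And>s. s \<in> UZ_gens n \<Longrightarrow> s \<in> SZ n i"
  shows "{Tfree i x + y | x y. x \<in> UZ n \<and> y \<in> rel_ideal n}
       = {x + y | x y. x \<in> UZ n \<and> y \<in> rel_ideal n}"
proof -
  have TF: "Tfree i x \<in> MZ n" if "x \<in> UZ n" for x
    using that unfolding UZ_def
  proof (induct x rule: zsubalg.induct)
    case one then show ?case using MZ_UZ[OF UZ_1] by (simp add: Tf_1)
  next
    case (gen s) then show ?case using F by blast
  next
    case (smult c a) then show ?case using zc_sc[OF zclosed_MZ] by (simp add: Tf_mult Tf_sc)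
  next
    case (add a b) then show ?case using zc_add[OF zclosed_MZ] by (simp add: Tf_add)
  next
    case (mult a b) then show ?case using zc_mult[OF zclosed_MZ] by (simp add: Tf_mult)
  qed
  have RS: "x \<in> SZ n i" if "x \<in> UZ n" for x
    using that unfolding UZ_def
  proof (induct x rule: zsubalg.induct)
    case one then show ?case using zc_1[OF zclosed_SZ] by blast
  next
    case (gen s) then show ?case using R by blast
  next
    case (smult c a) then show ?case using zc_sc[OF zclosed_SZ] by blast
  next
    case (add a b) then show ?case using zc_add[OF zclosed_SZ] by blast
  next
    case (mult a b) then show ?case using zc_mult[OF zclosed_SZ] by blast
  qed
  show ?thesis
  proof (intro equalityI subsetI)
    fix z assume "z \<in> {Tfree i x + y | x y. x \<in> UZ n \<and> y \<in> rel_ideal n}"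
    then obtain x y where h: "z = Tfree i x + y" "x \<in> UZ n" "y \<in> rel_ideal n" by blast
    then have "Tfree i x \<in> MZ n" using TF by blast
    then obtain x1 y1 where "Tfree i x = x1 + y1" "x1 \<in> UZ n" "y1 \<in> rel_ideal n" unfolding MZ_def by blast
    then have "z = x1 + (y1 + y)" "y1 + y \<in> rel_ideal n" using h by (auto simp: I_add)
    then show "z \<in> {x + y | x y. x \<in> UZ n \<and> y \<in> rel_ideal n}" using \<open>x1 \<in> UZ n\<close> by blast
  next
    fix z assume "z \<in> {x + y | x y. x \<in> UZ n \<and> y \<in> rel_ideal n}"
    then obtain x y where h: "z = x + y" "x \<in> UZ n" "y \<in> rel_ideal n" by blast
    then obtain a where a: "a \<in> UZ n" "cg n (Tfree i a) x" using RS unfolding SZ_def by blast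
    have "z = Tfree i a + (y - (Tfree i a - x))" using h by simp
    moreover have "y - (Tfree i a - x) \<in> rel_ideal n" using a h unfolding cg_def by (blast intro: I_diff)
    ultimately show "z \<in> {Tfree i x + y | x y. x \<in> UZ n \<and> y \<in> rel_ideal n}" using a by blast
  qed
qed


definition qcm :: "nat \<Rightarrow> alg \<Rightarrow> alg \<Rightarrow> qv \<Rightarrow> bool" where
  "qcm n P Y c \<longleftrightarrow> cg n (P * Y) (sc c * (Y * P))"

lemma qcm_mult_left:
  assumes "qcm n P1 Y c1" "qcm n P2 Y c2" shows "qcm n (P1 * P2) Y (c1 * c2)"
proof -
  have "P1 * P2 * Y = P1 * (P2 * Y)" by (simp add: mult.assoc)
  also have "cg n \<dots> (P1 * (sc c2 * (Y * P2)))" using assms(2) unfolding qcm_def by (rule cg_lmult)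
  also have "\<dots> = sc c2 * ((P1 * Y) * P2)" by (simp add: scs mult.assoc)
  also have "cg n \<dots> (sc c2 * ((sc c1 * (Y * P1)) * P2))" using assms(1) unfolding qcm_def by (intro cg_lmult cg_rmult)
  also have "\<dots> = sc (c1 * c2) * (Y * (P1 * P2))" by (simp add: scs mult.assoc mult.commute)
  finally show ?thesis unfolding qcm_def .
qed

lemma qcm_mult_right:
  assumes "qcm n P Y1 c1" "qcm n P Y2 c2" shows "qcm n P (Y1 * Y2) (c1 * c2)"
proof -
  have "P * (Y1 * Y2) = (P * Y1) * Y2" by (simp add: mult.assoc)
  also have "cg n \<dots> (sc c1 * (Y1 * P) * Y2)" using assms(1) unfolding qcm_def by (rule cg_rmult)
  also have "\<dots> = sc c1 * (Y1 * (P * Y2))" by (simp add: scs mult.assoc)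
  also have "cg n \<dots> (sc c1 * (Y1 * (sc c2 * (Y2 * P))))" using assms(2) unfolding qcm_def by (intro cg_lmult)
  also have "\<dots> = sc (c1 * c2) * ((Y1 * Y2) * P)" by (simp add: scs mult.assoc)
  finally show ?thesis unfolding qcm_def .
qed

lemma qcm_rev: "qcm n P Y c \<Longrightarrow> c \<noteq> 0 \<Longrightarrow> qcm n Y P (inverse c)"
  unfolding qcm_def
proof -
  assume h: "cg n (P * Y) (sc c * (Y * P))" and c: "c \<noteq> 0"
  have "cg n (sc (inverse c) * (P * Y)) (sc (inverse c) * (sc c * (Y * P)))" by (rule cg_lmult[OF h])
  then have "cg n (sc (inverse c) * (P * Y)) (Y * P)" using c by (simp add: scs)
  then show "cg n (Y * P) (sc (inverse c) * (P * Y))" by (rule cg_sym)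
qed

lemma qcm_inv:
  assumes h: "qcm n P Y c" and c: "c \<noteq> 0" and i1: "cg n (P * P') 1" and i2: "cg n (P' * P) 1"
  shows "qcm n P' Y (inverse c)"
proof -
  have r: "qcm n Y P (inverse c)" by (rule qcm_rev[OF h c])
  have "P' * Y = P' * Y * 1" by simp
  also have "cg n \<dots> (P' * Y * (P * P'))" by (intro cg_lmult cg_sym[OF i1])
  also have "\<dots> = P' * (Y * P) * P'" by (simp add: mult.assoc)
  also have "cg n \<dots> (P' * (sc (inverse c) * (P * Y)) * P')" using r unfolding qcm_def by (intro cg_lmult cg_rmult)
  also have "\<dots> = sc (inverse c) * ((P' * P) * (Y * P'))" by (simp add: scs mult.assoc)
  also have "cg n \<dots> (sc (inverse c) * (1 * (Y * P')))" by (intro cg_lmult cg_rmult i2)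
  finally show ?thesis unfolding qcm_def by simp
qed

lemma qcm_add: "qcm n P Y1 c \<Longrightarrow> qcm n P Y2 c \<Longrightarrow> qcm n P (Y1 + Y2) c"
  unfolding qcm_def by (drule (1) cg_add) (simp add: algebra_simps)
lemma qcm_diff: "qcm n P Y1 c \<Longrightarrow> qcm n P Y2 c \<Longrightarrow> qcm n P (Y1 - Y2) c"
  unfolding qcm_def by (drule (1) cg_diff) (simp add: algebra_simps)
lemma qcm_uminus: "qcm n P Y c \<Longrightarrow> qcm n P (- Y) c"
  unfolding qcm_def by (drule cg_uminus) (simp add: algebra_simps)
lemma qcm_sc: "qcm n P Y c \<Longrightarrow> qcm n P (sc a * Y) c"
  unfolding qcm_def by (drule cg_lmult[of _ _ _ "sc a"]) (simp add: scs mult.assoc mult.commute)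
lemma qcm_cong: "qcm n P Y c \<Longrightarrow> c = d \<Longrightarrow> qcm n P Y d" by simp
lemma qcm_power: "qcm n P Y c \<Longrightarrow> qcm n P (Y ^ k) (c ^ k)"
  unfolding qcm_def by (rule qc_pow)
lemma qcm_power_left: "qcm n P Y c \<Longrightarrow> qcm n (P ^ k) Y (c ^ k)"
proof (induct k)
  case 0 then show ?case by (simp add: qcm_def)
next
  case (Suc k)
  have "qcm n (P * P ^ k) Y (c * c ^ k)" by (rule qcm_mult_left[OF Suc(2) Suc(1)[OF Suc(2)]])
  then show ?case by simp
qed

lemma cg_pow_inv: "cg n (P * P') 1 \<Longrightarrow> qcm n P P' 1 \<Longrightarrow> cg n (P ^ k * P' ^ k) 1"
proof (induct k)
  case 0 then show ?case by simp
next
  case (Suc k)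
  have c: "qcm n (P ^ k) P' 1" using qcm_power_left[OF Suc(3), of k] by simp
  have "P ^ Suc k * P' ^ Suc k = P * ((P ^ k * P') * P' ^ k)" by (simp add: mult.assoc power_Suc2)
  also have "cg n \<dots> (P * ((sc 1 * (P' * P ^ k)) * P' ^ k))" using c unfolding qcm_def
    by (intro cg_lmult cg_rmult) simp
  also have "\<dots> = (P * P') * (P ^ k * P' ^ k)" by (simp add: mult.assoc)
  also have "cg n \<dots> (1 * 1)" by (intro cg_mult Suc)
  finally show ?case by simp
qed

lemma powQP: "qcm n P Q c \<Longrightarrow> cg n ((Q * P) ^ m) (sc (c ^ (\<Sum>k<m. k)) * (Q ^ m * P ^ m))"
proof (induct m)
  case 0 then show ?case by simp
next
  case (Suc m)
  let ?s = "\<Sum>k<m. k"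
  have "(Q * P) ^ Suc m = (Q * P) ^ m * (Q * P)" by (simp only: power_Suc2)
  also have "cg n \<dots> (sc (c ^ ?s) * (Q ^ m * P ^ m) * (Q * P))" by (intro cg_rmult Suc(1)[OF Suc(2)])
  also have "\<dots> = sc (c ^ ?s) * (Q ^ m * (P ^ m * Q) * P)" by (simp add: mult.assoc)
  also have "cg n \<dots> (sc (c ^ ?s) * (Q ^ m * (sc (c ^ m) * (Q * P ^ m)) * P))"
    using qcm_power_left[OF Suc(2), of m] unfolding qcm_def by (intro cg_lmult cg_rmult)
  also have "\<dots> = sc (c ^ (?s + m)) * ((Q ^ m * Q) * (P ^ m * P))"
    by (simp add: scs mult.assoc power_add)
  also have "\<dots> = sc (c ^ (\<Sum>k<Suc m. k)) * (Q ^ Suc m * P ^ Suc m)"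
    by (simp only: power_Suc2 sum.lessThan_Suc)
  finally show ?case .
qed

lemma DQP1: "qcm n P Q c \<Longrightarrow> cg n (D (Q * P) m) (sc (c ^ (\<Sum>k<m. k)) * (D Q m * P ^ m))"
proof -
  assume h: "qcm n P Q c"
  have "D (Q * P) m = sc (1 / qfact m) * (Q * P) ^ m" by (simp add: D_def)
  also have "cg n \<dots> (sc (1 / qfact m) * (sc (c ^ (\<Sum>k<m. k)) * (Q ^ m * P ^ m)))" by (intro cg_lmult powQP h)
  also have "\<dots> = sc (c ^ (\<Sum>k<m. k)) * (D Q m * P ^ m)" by (simp add: D_def scs mult.assoc mult.commute)
  finally show ?thesis .
qed

lemma DQP2: "qcm n P Q c \<Longrightarrow> cg n (D (Q * P) m) (sc (c ^ (\<Sum>k<m. k)) * (Q ^ m * D P m))"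
proof -
  assume h: "qcm n P Q c"
  have "D (Q * P) m = sc (1 / qfact m) * (Q * P) ^ m" by (simp add: D_def)
  also have "cg n \<dots> (sc (1 / qfact m) * (sc (c ^ (\<Sum>k<m. k)) * (Q ^ m * P ^ m)))" by (intro cg_lmult powQP h)
  also have "\<dots> = sc (c ^ (\<Sum>k<m. k)) * (Q ^ m * D P m)" by (simp add: D_def scs mult.assoc mult.commute)
  finally show ?thesis .
qed


lemma vpow_0[simp]: "vpow 0 = 1" by (simp add: vpow_def)
lemma vpow_1[simp]: "vpow 1 = vv" by (simp add: vpow_def)
lemma vpow_m1[simp]: "vpow (-1) = vi" by (simp add: vpow_def)
lemma vpow_nz: "vpow z \<noteq> 0" by (simp add: vpow_def)

lemma Zset_m1pow: "(-1) ^ m \<in> Zset"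
  by (cases "even m") (simp_all add: Zset_1 Zset_m1)
lemma Zset_sq_vv: "(vv * vv) ^ s \<in> Zset"
  using Zset_vv_pow[of "s + s"] by (simp add: power_mult_distrib power_add)
lemma Zset_sq_vi: "(vi * vi) ^ s \<in> Zset"
  using Zset_vi_pow[of "s + s"] by (simp add: power_mult_distrib power_add)

lemma qKK: "k \<in> {1..n} \<Longrightarrow> l \<in> {1..n} \<Longrightarrow> qcm n (Kg k) (Kg l) 1"
  unfolding qcm_def using rKK by simp
lemma qKiK: "k \<in> {1..n} \<Longrightarrow> l \<in> {1..n} \<Longrightarrow> qcm n (Kig k) (Kg l) 1"
  using qcm_inv[OF qKK _ rK1 rK2] by fastforce
lemma qKKi: "k \<in> {1..n} \<Longrightarrow> l \<in> {1..n} \<Longrightarrow> qcm n (Kg k) (Kig l) 1"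
  using qcm_rev[OF qKiK[where k=l and l=k and n=n]] by fastforce
lemma qKiKi: "k \<in> {1..n} \<Longrightarrow> l \<in> {1..n} \<Longrightarrow> qcm n (Kig k) (Kig l) 1"
  using qcm_inv[OF qKKi _ rK1 rK2] by fastforce
lemma qKE: "k \<in> {1..n} \<Longrightarrow> j \<in> {1..<n} \<Longrightarrow> qcm n (Kg k) (Eg j) (vpow (pair k j))"
  unfolding qcm_def using rKE by (simp add: mult.assoc)
lemma qKF: "k \<in> {1..n} \<Longrightarrow> j \<in> {1..<n} \<Longrightarrow> qcm n (Kg k) (Fg j) (vpow (- pair k j))"
  unfolding qcm_def using rKF by (simp add: mult.assoc)
lemma qKiE: "k \<in> {1..n} \<Longrightarrow> j \<in> {1..<n} \<Longrightarrow> qcm n (Kig k) (Eg j) (inverse (vpow (pair k j)))"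
  by (rule qcm_inv[OF qKE vpow_nz rK1 rK2])
lemma qKiF: "k \<in> {1..n} \<Longrightarrow> j \<in> {1..<n} \<Longrightarrow> qcm n (Kig k) (Fg j) (inverse (vpow (- pair k j)))"
  by (rule qcm_inv[OF qKF vpow_nz rK1 rK2])


lemma zc_power: "zclosed n C \<Longrightarrow> x \<in> C \<Longrightarrow> x ^ k \<in> C"
  by (induct k) (auto intro: zc_mult zc_1)

lemma m1sq: "((-1::qv) ^ m) * ((-1) ^ m) = 1" by (simp add: power_mult_distrib[symmetric])
lemma vsq: "((vi * vi) ^ s) * ((vv * vv) ^ s) = 1"
proof -
  have "vi * vi * (vv * vv) = 1" by (simp add: field_simps)
  then show ?thesis by (simp add: power_mult_distrib[symmetric])
qed

context
  fixes n i :: nat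
  assumes i1: "1 \<le> i" and iN: "i < n"
begin

lemma ii: "i \<in> {1..n}" "Suc i \<in> {1..n}" "i \<in> {1..<n}" using i1 iN by auto

abbreviation "PP \<equiv> Kg i * Kig (Suc i)"
abbreviation "PPi \<equiv> Kig i * Kg (Suc i)"

lemma qPPF: "qcm n PP (Fg i) (vi * vi)"
  using qcm_mult_left[OF qKF[OF ii(1) ii(3)] qKiF[OF ii(2) ii(3)]] by (simp add: pair_def)

lemma qPPiE: "qcm n PPi (Eg i) (vi * vi)"
  using qcm_mult_left[OF qKiE[OF ii(1) ii(3)] qKE[OF ii(2) ii(3)]] by (simp add: pair_def)

lemma qEPPi: "qcm n (Eg i) PPi (vv * vv)"
  using qcm_rev[OF qPPiE] by simp

lemma qPPPPi: "qcm n PP PPi 1"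
  using qcm_mult_left[OF qcm_mult_right[OF qKKi[OF ii(1) ii(1)] qKK[OF ii(1) ii(2)]]
                          qcm_mult_right[OF qKiKi[OF ii(2) ii(1)] qKiK[OF ii(2) ii(2)]]] by simp

lemma qPPiPP: "qcm n PPi PP 1"
  using qcm_rev[OF qPPPPi] by simp

lemma PP_PPi: "cg n (PP * PPi) 1"
proof -
  have "PP * PPi = Kg i * (Kig (Suc i) * Kig i) * Kg (Suc i)" by (simp add: mult.assoc)
  also have "cg n \<dots> (Kg i * (sc 1 * (Kig i * Kig (Suc i))) * Kg (Suc i))"
    using qKiKi[OF ii(2) ii(1)] unfolding qcm_def by (intro cg_lmult cg_rmult)
  also have "\<dots> = (Kg i * Kig i) * (Kig (Suc i) * Kg (Suc i))" by (simp add: mult.assoc)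
  also have "cg n \<dots> (1 * 1)" by (intro cg_mult rK1 rK2 ii)
  finally show ?thesis by simp
qed

lemma PPi_PP: "cg n (PPi * PP) 1"
proof -
  have "PPi * PP = Kig i * (Kg (Suc i) * Kg i) * Kig (Suc i)" by (simp add: mult.assoc)
  also have "cg n \<dots> (Kig i * (sc 1 * (Kg i * Kg (Suc i))) * Kig (Suc i))"
    using qKK[OF ii(2) ii(1)] unfolding qcm_def by (intro cg_lmult cg_rmult)
  also have "\<dots> = (Kig i * Kg i) * (Kg (Suc i) * Kig (Suc i))" by (simp add: mult.assoc)
  also have "cg n \<dots> (1 * 1)" by (intro cg_mult rK1 rK2 ii)
  finally show ?thesis by simp
qed

lemma swp_simps: "swp i i = Suc i" "swp i (Suc i) = i" by (simp_all add: swp_def)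

lemma T_PP: "Tfree i (Kg (Suc i) * Kig i) = PP" by (simp add: Tfs swp_simps)
lemma T_PPi: "Tfree i (Kig (Suc i) * Kg i) = PPi" by (simp add: Tfs swp_simps)

lemma LE: "cg n (D (Tg i (GE i)) m) (sc ((-1) ^ m) * (sc ((vi * vi) ^ (\<Sum>k<m. k)) * (D (Fg i) m * PP ^ m)))"
proof -
  have "Tg i (GE i) = - (Fg i * PP)" by (simp add: mult.assoc)
  then have "D (Tg i (GE i)) m = sc ((-1) ^ m) * D (Fg i * PP) m" by (simp add: D_neg)
  also have "cg n \<dots> (sc ((-1) ^ m) * (sc ((vi * vi) ^ (\<Sum>k<m. k)) * (D (Fg i) m * PP ^ m)))"
    by (intro cg_lmult DQP1 qPPF)
  finally show ?thesis .
qed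

lemma LF: "cg n (D (Tg i (GF i)) m) (sc ((-1) ^ m) * (sc ((vv * vv) ^ (\<Sum>k<m. k)) * (PPi ^ m * D (Eg i) m)))"
proof -
  have "Tg i (GF i) = - (PPi * Eg i)" by (simp add: mult.assoc)
  then have "D (Tg i (GF i)) m = sc ((-1) ^ m) * D (PPi * Eg i) m" by (simp add: D_neg)
  also have "cg n \<dots> (sc ((-1) ^ m) * (sc ((vv * vv) ^ (\<Sum>k<m. k)) * (PPi ^ m * D (Eg i) m)))"
    by (intro cg_lmult DQP2 qEPPi)
  finally show ?thesis .
qed

lemma PPm: "cg n (PP ^ m * PPi ^ m) 1" by (rule cg_pow_inv[OF PP_PPi qPPPPi])
lemma PPim: "cg n (PPi ^ m * PP ^ m) 1" by (rule cg_pow_inv[OF PPi_PP qPPiPP])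

lemma revE_i: "cg n (sc ((-1) ^ m) * (sc ((vi * vi) ^ (\<Sum>k<m. k)) * (PP ^ m * D (Tg i (GF i)) m))) (D (Eg i) m)"
proof -
  let ?s = "\<Sum>k<m. k"
  have "cg n (sc ((-1) ^ m) * (sc ((vi * vi) ^ ?s) * (PP ^ m * D (Tg i (GF i)) m)))
     (sc ((-1) ^ m) * (sc ((vi * vi) ^ ?s) * (PP ^ m * (sc ((-1) ^ m) * (sc ((vv * vv) ^ ?s) * (PPi ^ m * D (Eg i) m))))))"
    by (intro cg_lmult LF)
  also have "\<dots> = sc (((-1) ^ m * (-1) ^ m) * ((vi * vi) ^ ?s * (vv * vv) ^ ?s)) * ((PP ^ m * PPi ^ m) * D (Eg i) m)"
    by (simp add: scs mult.assoc mult.commute mult.left_commute)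
  also have "\<dots> = (PP ^ m * PPi ^ m) * D (Eg i) m" by (simp only: m1sq vsq mult_1 sc_1 mult_1_left)
  also have "cg n \<dots> (1 * D (Eg i) m)" by (intro cg_rmult PPm)
  finally show ?thesis by simp
qed

lemma revF_i: "cg n (sc ((-1) ^ m) * (sc ((vv * vv) ^ (\<Sum>k<m. k)) * (D (Tg i (GE i)) m * PPi ^ m))) (D (Fg i) m)"
proof -
  let ?s = "\<Sum>k<m. k"
  have "cg n (sc ((-1) ^ m) * (sc ((vv * vv) ^ ?s) * (D (Tg i (GE i)) m * PPi ^ m)))
     (sc ((-1) ^ m) * (sc ((vv * vv) ^ ?s) * ((sc ((-1) ^ m) * (sc ((vi * vi) ^ ?s) * (D (Fg i) m * PP ^ m))) * PPi ^ m)))"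
    by (intro cg_lmult cg_rmult LE)
  also have "\<dots> = sc (((-1) ^ m * (-1) ^ m) * ((vi * vi) ^ ?s * (vv * vv) ^ ?s)) * (D (Fg i) m * (PP ^ m * PPi ^ m))"
    by (simp add: scs mult.assoc mult.commute mult.left_commute)
  also have "\<dots> = D (Fg i) m * (PP ^ m * PPi ^ m)" by (simp only: m1sq vsq mult_1 sc_1 mult_1_left)
  also have "cg n \<dots> (D (Fg i) m * 1)" by (intro cg_lmult PPm)
  finally show ?thesis by simp
qed

end


context
  fixes n i j :: nat
  assumes i1: "1 \<le> i" and iN: "i < n" and jr: "j \<in> {1..<n}" and adj: "i + 1 = j \<or> j + 1 = i"
begin

lemma ii': "i \<in> {1..n}" "Suc i \<in> {1..n}" "i \<in> {1..<n}" using i1 iN by auto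
lemma jn: "j \<noteq> i" using adj by auto

abbreviation "XE \<equiv> Eg i * Eg j - sc vi * (Eg j * Eg i)"
abbreviation "HH \<equiv> (PP i - PPi i) * sc (1 / (vv - vi))"

lemma qPPEj: "qcm n (PP i) (Eg j) vi"
  using qcm_mult_left[OF qKE[OF ii'(1) jr] qKiE[OF ii'(2) jr]] adj by (auto simp: pair_def)

lemma qPPiEj: "qcm n (PPi i) (Eg j) vv"
  using qcm_inv[OF qPPEj _ PP_PPi[OF i1 iN] PPi_PP[OF i1 iN]] by simp

lemma qPPEi: "qcm n (PP i) (Eg i) (vv * vv)"
  using qcm_mult_left[OF qKE[OF ii'(1) ii'(3)] qKiE[OF ii'(2) ii'(3)]] by (simp add: pair_def)

lemma qPPX: "qcm n (PP i) XE vv"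
proof -
  have a: "qcm n (PP i) (Eg i * Eg j) vv"
    using qcm_mult_right[OF qPPEi qPPEj] by (simp add: field_simps)
  have b: "qcm n (PP i) (Eg j * Eg i) vv"
    using qcm_mult_right[OF qPPEj qPPEi] by (simp add: field_simps)
  show ?thesis by (intro qcm_diff qcm_sc a b)
qed

lemma EjFi: "Eg j * Fg i - Fg i * Eg j \<in> rel_ideal n"
  using rEF[OF jr ii'(3)] jn unfolding cg_def by (simp add: dl_def)

lemma EiFi: "Eg i * Fg i - Fg i * Eg i - HH \<in> rel_ideal n"
  using rEF[OF ii'(3) ii'(3)] unfolding cg_def by (simp add: dl_def)

lemma step2: "cg n (XE * Fg i - Fg i * XE) (HH * Eg j - sc vi * (Eg j * HH))"
proof -
  let ?r1 = "Eg i * Fg i - Fg i * Eg i - HH" and ?r2 = "Eg j * Fg i - Fg i * Eg j"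
  have "(XE * Fg i - Fg i * XE) - (HH * Eg j - sc vi * (Eg j * HH))
      = ?r1 * Eg j - (sc vi * Eg j) * ?r1 + Eg i * ?r2 - (sc vi * ?r2) * Eg i"
    by (simp add: algebra_simps scs)
  also have "\<dots> \<in> rel_ideal n"
  proof -
    have m1: "?r1 * Eg j \<in> rel_ideal n" by (rule I_right[OF EiFi])
    have m2: "(sc vi * Eg j) * ?r1 \<in> rel_ideal n" by (rule I_left[OF EiFi])
    have m3: "Eg i * ?r2 \<in> rel_ideal n" by (rule I_left[OF EjFi])
    have m4: "(sc vi * ?r2) * Eg i \<in> rel_ideal n" by (rule I_right[OF I_left[OF EjFi]])
    show ?thesis by (rule I_diff[OF I_add[OF I_diff[OF m1 m2] m3] m4])
  qed
  finally show ?thesis unfolding cg_def .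
qed

lemma step3: "cg n (HH * Eg j - sc vi * (Eg j * HH)) (- (Eg j * PPi i))"
proof -
  define c where "c = 1 / (vv - vi)"
  let ?s1 = "PP i * Eg j - sc vi * (Eg j * PP i)" and ?s2 = "PPi i * Eg j - sc vv * (Eg j * PPi i)"
  have s1: "?s1 \<in> rel_ideal n" using qPPEj unfolding qcm_def cg_def .
  have s2: "?s2 \<in> rel_ideal n" using qPPiEj unfolding qcm_def cg_def .
  have z: "1 + c * (vi - vv) = 0" using vv_vi_ne by (simp add: field_simps c_def)
  have "(HH * Eg j - sc vi * (Eg j * HH)) - (- (Eg j * PPi i))
      = sc c * ?s1 - sc c * ?s2 + sc (1 + c * (vi - vv)) * (Eg j * PPi i)"
    unfolding c_def[symmetric] by (simp add: algebra_simps scs)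
  also have "\<dots> = sc c * ?s1 - sc c * ?s2" by (simp only: z sc_0 mult_zero_left add_0_right)
  also have "\<dots> \<in> rel_ideal n" by (rule I_diff[OF I_left[OF s1] I_left[OF s2]])
  finally show ?thesis unfolding cg_def .
qed

lemma hAB1: "cg n (XE * (Fg i * PP i)) (sc (inverse vv) * ((Fg i * PP i) * XE) + - Eg j)"
proof -
  have "XE * (Fg i * PP i) = (XE * Fg i - Fg i * XE) * PP i + Fg i * XE * PP i"
    by (simp add: algebra_simps)
  also have "cg n \<dots> ((- (Eg j * PPi i)) * PP i + Fg i * XE * PP i)"
    by (intro cg_add cg_rmult cg_refl cg_trans[OF step2 step3])
  also have "\<dots> = - (Eg j * (PPi i * PP i)) + Fg i * XE * PP i" by (simp add: mult.assoc)
  also have "cg n \<dots> (- (Eg j * 1) + Fg i * XE * PP i)"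
    by (intro cg_add cg_uminus cg_lmult cg_refl PPi_PP[OF i1 iN])
  finally have l: "cg n (XE * (Fg i * PP i)) (Fg i * XE * PP i - Eg j)" by (simp add: algebra_simps)
  have "sc (inverse vv) * ((Fg i * PP i) * XE) + - Eg j = sc vi * (Fg i * (PP i * XE)) - Eg j"
    by (simp add: mult.assoc)
  also have "cg n \<dots> (sc vi * (Fg i * (sc vv * (XE * PP i))) - Eg j)"
    using qPPX unfolding qcm_def by (intro cg_diff cg_lmult cg_refl)
  also have "\<dots> = Fg i * XE * PP i - Eg j" by (simp add: scs mult.assoc)
  finally have r: "cg n (sc (inverse vv) * ((Fg i * PP i) * XE) + - Eg j) (Fg i * XE * PP i - Eg j)" .
  show ?thesis by (rule cg_trans[OF l cg_sym[OF r]])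
qed

lemma hAW1: "cg n (XE * (- Eg j)) (sc vv * ((- Eg j) * XE))"
proof -
  have "cg n (XE * Eg j) (sc vv * (Eg j * XE))"
    using serre_WB[OF vv_nz rSE[OF jr ii'(3)]] adj by auto
  from cg_uminus[OF this] show ?thesis by simp
qed

lemma hWB1: "cg n ((- Eg j) * (Fg i * PP i)) (sc vv * ((Fg i * PP i) * (- Eg j)))"
proof -
  have r: "qcm n (Eg j) (PP i) vv" using qcm_rev[OF qPPEj] by simp
  have "Eg j * (Fg i * PP i) = (Eg j * Fg i) * PP i" by (simp add: mult.assoc)
  also have "cg n \<dots> ((Fg i * Eg j) * PP i)" using EjFi unfolding cg_def[symmetric] by (intro cg_rmult)
  also have "\<dots> = Fg i * (Eg j * PP i)" by (simp add: mult.assoc)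
  also have "cg n \<dots> (Fg i * (sc vv * (PP i * Eg j)))" using r unfolding qcm_def by (intro cg_lmult)
  also have "\<dots> = sc vv * ((Fg i * PP i) * Eg j)" by (simp add: scs mult.assoc)
  finally have "cg n (Eg j * (Fg i * PP i)) (sc vv * ((Fg i * PP i) * Eg j))" .
  from cg_uminus[OF this] show ?thesis by simp
qed

lemma revE_adj: "D (Eg j) m \<in> SZ n i"
proof -
  have C: "zclosed n (SZ n i)" by (rule zclosed_SZ)
  have vq: "vv \<in> qset" by (simp add: qset_def)
  have TEj: "Tg i (GE j) = - XE" using jn adj by (auto simp: algebra_simps)
  have TEi: "Tg i (GE i) = - (Fg i * PP i)" by (simp add: mult.assoc)
  have hA: "D XE a \<in> SZ n i" for a
  proof -
    have "D (Eg j) a \<in> UZ n" unfolding D_def using jr by (intro UZ_gen) (auto simp: UZ_gens_def)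
    then have "Tfree i (D (Eg j) a) \<in> SZ n i" by (rule SZ_T)
    then have "D (- XE) a \<in> SZ n i" by (simp only: Tf_D Tf_g TEj)
    then have "sc ((-1) ^ a) * D (- XE) a \<in> SZ n i" by (rule zc_sc[OF C Zset_m1pow])
    then show ?thesis by (simp only: D_neg sc_ll m1sq sc_1 mult_1_left)
  qed
  have hB: "D (Fg i * PP i) b \<in> SZ n i" for b
  proof -
    have "D (Eg i) b \<in> UZ n" unfolding D_def using ii'(3) by (intro UZ_gen) (auto simp: UZ_gens_def)
    then have "Tfree i (D (Eg i) b) \<in> SZ n i" by (rule SZ_T)
    then have "D (- (Fg i * PP i)) b \<in> SZ n i" by (simp only: Tf_D Tf_g TEi)
    then have "sc ((-1) ^ b) * D (- (Fg i * PP i)) b \<in> SZ n i" by (rule zc_sc[OF C Zset_m1pow])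
    then show ?thesis by (simp only: D_neg sc_ll m1sq sc_1 mult_1_left)
  qed
  have "D (- Eg j) m \<in> SZ n i"
    by (rule W_in[OF vq hAB1 hAW1 hWB1 C hA hB])
  then have "sc ((-1) ^ m) * D (- Eg j) m \<in> SZ n i" by (rule zc_sc[OF C Zset_m1pow])
  then show ?thesis by (simp only: D_neg sc_ll m1sq sc_1 mult_1_left)
qed

end


context
  fixes n i j :: nat
  assumes i1: "1 \<le> i" and iN: "i < n" and jr: "j \<in> {1..<n}" and adj: "i + 1 = j \<or> j + 1 = i"
begin

lemma ii2: "i \<in> {1..n}" "Suc i \<in> {1..n}" "i \<in> {1..<n}" using i1 iN by auto
lemma jn2: "j \<noteq> i" using adj by auto

abbreviation "YF \<equiv> Fg j * Fg i - sc vv * (Fg i * Fg j)"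

lemma qPPiFj: "qcm n (PPi i) (Fg j) vi"
  using qcm_mult_left[OF qKiF[OF ii2(1) jr] qKF[OF ii2(2) jr]] adj by (auto simp: pair_def)

lemma qPPFj: "qcm n (PP i) (Fg j) vv"
  using qcm_inv[OF qPPiFj _ PPi_PP[OF i1 iN] PP_PPi[OF i1 iN]] by simp

lemma qPPiFi: "qcm n (PPi i) (Fg i) (vv * vv)"
  using qcm_mult_left[OF qKiF[OF ii2(1) ii2(3)] qKF[OF ii2(2) ii2(3)]] by (simp add: pair_def)

lemma qPPiY: "qcm n (PPi i) YF vv"
proof -
  have a: "qcm n (PPi i) (Fg j * Fg i) vv"
    using qcm_mult_right[OF qPPiFj qPPiFi] by (simp add: field_simps)
  have b: "qcm n (PPi i) (Fg i * Fg j) vv"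
    using qcm_mult_right[OF qPPiFi qPPiFj] by (simp add: field_simps)
  show ?thesis by (intro qcm_diff qcm_sc a b)
qed

lemma EiFj: "Eg i * Fg j - Fg j * Eg i \<in> rel_ideal n"
  using rEF[OF ii2(3) jr] jn2 unfolding cg_def by (simp add: dl_def)

lemma EiFi2: "Eg i * Fg i - Fg i * Eg i - HH i \<in> rel_ideal n"
  using rEF[OF ii2(3) ii2(3)] unfolding cg_def by (simp add: dl_def)

lemma step2F: "cg n (Eg i * YF - YF * Eg i) (Fg j * HH i - sc vv * (HH i * Fg j))"
proof -
  let ?r1 = "Eg i * Fg i - Fg i * Eg i - HH i" and ?r3 = "Eg i * Fg j - Fg j * Eg i"
  have "(Eg i * YF - YF * Eg i) - (Fg j * HH i - sc vv * (HH i * Fg j))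
      = ?r3 * Fg i + Fg j * ?r1 - (sc vv * ?r1) * Fg j - (sc vv * Fg i) * ?r3"
    by (simp add: algebra_simps scs)
  also have "\<dots> \<in> rel_ideal n"
  proof -
    have m1: "?r3 * Fg i \<in> rel_ideal n" by (rule I_right[OF EiFj])
    have m2: "Fg j * ?r1 \<in> rel_ideal n" by (rule I_left[OF EiFi2])
    have m3: "(sc vv * ?r1) * Fg j \<in> rel_ideal n" by (rule I_right[OF I_left[OF EiFi2]])
    have m4: "(sc vv * Fg i) * ?r3 \<in> rel_ideal n" by (rule I_left[OF EiFj])
    show ?thesis by (rule I_diff[OF I_diff[OF I_add[OF m1 m2] m3] m4])
  qed
  finally show ?thesis unfolding cg_def .
qed

lemma step3F: "cg n (Fg j * HH i - sc vv * (HH i * Fg j)) (- (sc vv * (Fg j * PP i)))"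
proof -
  define c where "c = 1 / (vv - vi)"
  let ?s3 = "PP i * Fg j - sc vv * (Fg j * PP i)" and ?s4 = "PPi i * Fg j - sc vi * (Fg j * PPi i)"
  have s3: "?s3 \<in> rel_ideal n" using qPPFj unfolding qcm_def cg_def .
  have s4: "?s4 \<in> rel_ideal n" using qPPiFj unfolding qcm_def cg_def .
  have z1: "c + vv - vv * c * vv = 0" using vv_vi_ne by (simp add: field_simps c_def)
  have z2: "vv * c * vi - c = 0" by simp
  have "(Fg j * HH i - sc vv * (HH i * Fg j)) - (- (sc vv * (Fg j * PP i)))
      = sc (- (vv * c)) * ?s3 + sc (vv * c) * ?s4 + sc (c + vv - vv * c * vv) * (Fg j * PP i)
        + sc (vv * c * vi - c) * (Fg j * PPi i)"
    unfolding c_def[symmetric] by (simp add: algebra_simps scs)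
  also have "\<dots> = sc (- (vv * c)) * ?s3 + sc (vv * c) * ?s4"
    by (simp only: z1 z2 sc_0 mult_zero_left add_0_right)
  also have "\<dots> \<in> rel_ideal n" by (rule I_add[OF I_left[OF s3] I_left[OF s4]])
  finally show ?thesis unfolding cg_def .
qed

lemma hAB2: "cg n ((PPi i * Eg i) * YF) (sc (inverse vi) * (YF * (PPi i * Eg i)) + - Fg j)"
proof -
  have rY: "qcm n YF (PPi i) vi" using qcm_rev[OF qPPiY] by simp
  have "(PPi i * Eg i) * YF = PPi i * (Eg i * YF - YF * Eg i) + PPi i * YF * Eg i"
    by (simp add: algebra_simps)
  also have "cg n \<dots> (PPi i * (- (sc vv * (Fg j * PP i))) + PPi i * YF * Eg i)"
    by (intro cg_add cg_lmult cg_refl cg_trans[OF step2F step3F])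
  also have "\<dots> = - (sc vv * ((PPi i * Fg j) * PP i)) + PPi i * YF * Eg i" by (simp add: scs mult.assoc)
  also have "cg n \<dots> (- (sc vv * ((sc vi * (Fg j * PPi i)) * PP i)) + PPi i * YF * Eg i)"
    using qPPiFj unfolding qcm_def by (intro cg_add cg_uminus cg_lmult cg_rmult cg_refl)
  also have "\<dots> = - (Fg j * (PPi i * PP i)) + PPi i * YF * Eg i" by (simp add: scs mult.assoc)
  also have "cg n \<dots> (- (Fg j * 1) + PPi i * YF * Eg i)"
    by (intro cg_add cg_uminus cg_lmult cg_refl PPi_PP[OF i1 iN])
  finally have l: "cg n ((PPi i * Eg i) * YF) (PPi i * YF * Eg i - Fg j)" by (simp add: algebra_simps)
  have "sc (inverse vi) * (YF * (PPi i * Eg i)) + - Fg j = sc vv * ((YF * PPi i) * Eg i) - Fg j"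
    by (simp add: mult.assoc)
  also have "cg n \<dots> (sc vv * ((sc vi * (PPi i * YF)) * Eg i) - Fg j)"
    using rY unfolding qcm_def by (intro cg_diff cg_lmult cg_rmult cg_refl)
  also have "\<dots> = PPi i * YF * Eg i - Fg j" by (simp add: scs mult.assoc)
  finally have r: "cg n (sc (inverse vi) * (YF * (PPi i * Eg i)) + - Fg j) (PPi i * YF * Eg i - Fg j)" .
  show ?thesis by (rule cg_trans[OF l cg_sym[OF r]])
qed

lemma hAW2: "cg n ((PPi i * Eg i) * (- Fg j)) (sc vi * ((- Fg j) * (PPi i * Eg i)))"
proof -
  have "PPi i * Eg i * Fg j = PPi i * (Eg i * Fg j)" by (simp add: mult.assoc)
  also have "cg n \<dots> (PPi i * (Fg j * Eg i))" using EiFj unfolding cg_def[symmetric] by (intro cg_lmult)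
  also have "\<dots> = (PPi i * Fg j) * Eg i" by (simp add: mult.assoc)
  also have "cg n \<dots> ((sc vi * (Fg j * PPi i)) * Eg i)" using qPPiFj unfolding qcm_def by (intro cg_rmult)
  also have "\<dots> = sc vi * (Fg j * (PPi i * Eg i))" by (simp add: scs mult.assoc)
  finally have "cg n (PPi i * Eg i * Fg j) (sc vi * (Fg j * (PPi i * Eg i)))" .
  from cg_uminus[OF this] show ?thesis by simp
qed

lemma hWB2: "cg n ((- Fg j) * YF) (sc vi * (YF * (- Fg j)))"
proof -
  have s: "cg n (Fg j ^ 2 * Fg i - sc (vi + inverse vi) * Fg j * Fg i * Fg j + Fg i * Fg j ^ 2) 0"
    using rSF[OF jr ii2(3)] adj by (auto simp: add.commute)
  have "cg n (Fg j * (Fg j * Fg i - sc (inverse vi) * (Fg i * Fg j))) (sc vi * ((Fg j * Fg i - sc (inverse vi) * (Fg i * Fg j)) * Fg j))"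
    by (rule serre_AW[OF vi_nz s])
  then have "cg n (Fg j * YF) (sc vi * (YF * Fg j))" by simp
  from cg_uminus[OF this] show ?thesis by simp
qed

lemma revF_adj: "D (Fg j) m \<in> SZ n i"
proof -
  have C: "zclosed n (SZ n i)" by (rule zclosed_SZ)
  have vq: "vi \<in> qset" by (simp add: qset_def)
  have TFj: "Tg i (GF j) = - YF" using jn2 adj by (auto simp: algebra_simps)
  have TFi: "Tg i (GF i) = - (PPi i * Eg i)" by (simp add: mult.assoc)
  have hA: "D (PPi i * Eg i) a \<in> SZ n i" for a
  proof -
    have "D (Fg i) a \<in> UZ n" unfolding D_def using ii2(3) by (intro UZ_gen) (auto simp: UZ_gens_def)
    then have "Tfree i (D (Fg i) a) \<in> SZ n i" by (rule SZ_T)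
    then have "D (- (PPi i * Eg i)) a \<in> SZ n i" by (simp only: Tf_D Tf_g TFi)
    then have "sc ((-1) ^ a) * D (- (PPi i * Eg i)) a \<in> SZ n i" by (rule zc_sc[OF C Zset_m1pow])
    then show ?thesis by (simp only: D_neg sc_ll m1sq sc_1 mult_1_left)
  qed
  have hB: "D YF b \<in> SZ n i" for b
  proof -
    have "D (Fg j) b \<in> UZ n" unfolding D_def using jr by (intro UZ_gen) (auto simp: UZ_gens_def)
    then have "Tfree i (D (Fg j) b) \<in> SZ n i" by (rule SZ_T)
    then have "D (- YF) b \<in> SZ n i" by (simp only: Tf_D Tf_g TFj)
    then have "sc ((-1) ^ b) * D (- YF) b \<in> SZ n i" by (rule zc_sc[OF C Zset_m1pow])
    then show ?thesis by (simp only: D_neg sc_ll m1sq sc_1 mult_1_left)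
  qed
  have "D (- Fg j) m \<in> SZ n i"
    by (rule W_in[OF vq hAB2 hAW2 hWB2 C hA hB])
  then have "sc ((-1) ^ m) * D (- Fg j) m \<in> SZ n i" by (rule zc_sc[OF C Zset_m1pow])
  then show ?thesis by (simp only: D_neg sc_ll m1sq sc_1 mult_1_left)
qed

end


lemma gens_cases:
  assumes "s \<in> UZ_gens n"
  obtains (K) k where "k \<in> {1..n}" "s = Kg k"
    | (Ki) k where "k \<in> {1..n}" "s = Kig k"
    | (Kb) k where "k \<in> {1..n}" "s = Kbg k"
    | (Q) k t where "k \<in> {1..n}" "s = qbinK k t"
    | (Eb) j where "j \<in> {1..<n}" "s = Ebg j"
    | (Fb) j where "j \<in> {1..<n}" "s = Fbg j"
    | (E) j m where "j \<in> {1..<n}" "s = D (Eg j) m"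
    | (F) j m where "j \<in> {1..<n}" "s = D (Fg j) m"
  using assms unfolding UZ_gens_def D_def by blast

lemma UZ_K: "k \<in> {1..n} \<Longrightarrow> Kg k \<in> UZ n" by (intro UZ_gen) (auto simp: UZ_gens_def)
lemma UZ_Ki: "k \<in> {1..n} \<Longrightarrow> Kig k \<in> UZ n" by (intro UZ_gen) (auto simp: UZ_gens_def)
lemma UZ_Kb: "k \<in> {1..n} \<Longrightarrow> Kbg k \<in> UZ n" by (intro UZ_gen) (auto simp: UZ_gens_def)
lemma UZ_Q: "k \<in> {1..n} \<Longrightarrow> qbinK k t \<in> UZ n" by (intro UZ_gen) (auto simp: UZ_gens_def)
lemma UZ_Eb: "j \<in> {1..<n} \<Longrightarrow> Ebg j \<in> UZ n" by (intro UZ_gen) (auto simp: UZ_gens_def)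
lemma UZ_Fb: "j \<in> {1..<n} \<Longrightarrow> Fbg j \<in> UZ n" by (intro UZ_gen) (auto simp: UZ_gens_def)
lemma UZ_DE: "j \<in> {1..<n} \<Longrightarrow> D (Eg j) m \<in> UZ n" unfolding D_def by (intro UZ_gen) (auto simp: UZ_gens_def)
lemma UZ_DF: "j \<in> {1..<n} \<Longrightarrow> D (Fg j) m \<in> UZ n" unfolding D_def by (intro UZ_gen) (auto simp: UZ_gens_def)
lemma UZ_E: "j \<in> {1..<n} \<Longrightarrow> Eg j \<in> UZ n" using UZ_DE[of j n 1] by simp
lemma UZ_F: "j \<in> {1..<n} \<Longrightarrow> Fg j \<in> UZ n" using UZ_DF[of j n 1] by simp

lemma zc_vvvi: "zclosed n C \<Longrightarrow> x \<in> C \<Longrightarrow> sc (vv - vi) * x \<in> C"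
  by (simp add: sc_diff left_diff_distrib zc_diff zc_sc Zset_vv Zset_vi)

lemma swp_range: "i < n \<Longrightarrow> k \<in> {1..n} \<Longrightarrow> 1 \<le> i \<Longrightarrow> swp i k \<in> {1..n}" by (auto simp: swp_def)
lemma swp_swp: "swp i (swp i k) = k" by (auto simp: swp_def)

lemma T_qbinK: "Tfree i (qbinK k t) = qbinK (swp i k) t"
  by (simp add: qbinK_def Tf_prod_list o_def Tf_mult Tf_diff Tf_g Tf_sc)

context
  fixes n i :: nat
  assumes i1: "1 \<le> i" and iN: "i < n"
begin

lemma iiF: "i \<in> {1..n}" "Suc i \<in> {1..n}" "i \<in> {1..<n}" using i1 iN by auto

lemmas MZc = zclosed_MZ[of n]
lemma MZ_u: "x \<in> UZ n \<Longrightarrow> x \<in> MZ n" by (rule MZ_UZ)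

lemma fwd: "s \<in> UZ_gens n \<Longrightarrow> Tfree i s \<in> MZ n"
proof (erule gens_cases)
  fix k assume k: "k \<in> {1..n}" "s = Kg k"
  then show ?thesis using swp_range[OF iN k(1) i1] by (simp add: Tf_g MZ_u UZ_K)
next
  fix k assume k: "k \<in> {1..n}" "s = Kig k"
  then show ?thesis using swp_range[OF iN k(1) i1] by (simp add: Tf_g MZ_u UZ_Ki)
next
  fix k t assume k: "k \<in> {1..n}" "s = qbinK k t"
  then show ?thesis using swp_range[OF iN k(1) i1] by (simp add: T_qbinK MZ_u UZ_Q)
next
  fix k assume k: "k \<in> {1..n}" "s = Kbg k"
  show ?thesis
  proof (cases "k = i")
    case True then show ?thesis using k iiF by (simp add: Tf_g MZ_u UZ_Kb)
  next
    case False
    show ?thesis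
    proof (cases "k = i + 1")
      case True
      have "Tfree i s = sc (vv - vi) * Kbg (i + 1) * Fg i * Eg i - sc (vv - vi) * Fg i * Eg i * Kbg (i + 1) + Kbg i"
        using k True by (simp add: Tf_g)
      also have "\<dots> \<in> MZ n"
        using iiF by (simp only: mult.assoc) (intro zc_add[OF MZc] zc_diff[OF MZc] zc_vvvi[OF MZc] zc_mult[OF MZc] MZ_u UZ_Kb UZ_F UZ_E; simp)
      finally show ?thesis .
    next
      case False2: False
      then show ?thesis using k False by (simp add: Tf_g MZ_u UZ_Kb)
    qed
  qed
next
  fix j assume j: "j \<in> {1..<n}" "s = Ebg j"
  show ?thesis
  proof (cases "j = i")
    case True
    have "Tfree i s = - Kbg (i + 1) * Fg i * Kg i + sc vv * Fg i * Kbg (i + 1) * Kg i"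
      using j True by (simp add: Tf_g)
    also have "\<dots> \<in> MZ n"
      using iiF by (simp only: mult.assoc) (intro zc_add[OF MZc] zc_uminus[OF MZc] zc_sc[OF MZc] zc_mult[OF MZc] MZ_u UZ_Kb UZ_F UZ_K Zset_vv; simp)
    finally show ?thesis .
  next
    case False
    show ?thesis
    proof (cases "i + 1 = j \<or> j + 1 = i")
      case True
      have "Tfree i s = - Eg i * Ebg j + sc vi * Ebg j * Eg i"
        using j True False by (simp add: Tf_g)
      also have "\<dots> \<in> MZ n"
        using iiF j by (simp only: mult.assoc) (intro zc_add[OF MZc] zc_uminus[OF MZc] zc_sc[OF MZc] zc_mult[OF MZc] MZ_u UZ_Eb UZ_E Zset_vi; simp)
      finally show ?thesis .
    next
      case False2: False
      then show ?thesis using j False by (simp add: Tf_g MZ_u UZ_Eb)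
    qed
  qed
next
  fix j assume j: "j \<in> {1..<n}" "s = Fbg j"
  show ?thesis
  proof (cases "j = i")
    case True
    have "Tfree i s = - Kig i * Eg i * Kbg (i + 1) + sc vi * Kbg (i + 1) * Kig i * Eg i"
      using j True by (simp add: Tf_g)
    also have "\<dots> \<in> MZ n"
      using iiF by (simp only: mult.assoc) (intro zc_add[OF MZc] zc_uminus[OF MZc] zc_sc[OF MZc] zc_mult[OF MZc] MZ_u UZ_Kb UZ_E UZ_Ki Zset_vi; simp)
    finally show ?thesis .
  next
    case False
    show ?thesis
    proof (cases "i + 1 = j \<or> j + 1 = i")
      case True
      have "Tfree i s = - Fbg j * Fg i + sc vv * Fg i * Fbg j"
        using j True False by (simp add: Tf_g)
      also have "\<dots> \<in> MZ n"
        using iiF j by (simp only: mult.assoc) (intro zc_add[OF MZc] zc_uminus[OF MZc] zc_sc[OF MZc] zc_mult[OF MZc] MZ_u UZ_Fb UZ_F Zset_vv; simp)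
      finally show ?thesis .
    next
      case False2: False
      then show ?thesis using j False by (simp add: Tf_g MZ_u UZ_Fb)
    qed
  qed
next
  fix j m assume j: "j \<in> {1..<n}" "s = D (Eg j) m"
  have Ts: "Tfree i s = D (Tg i (GE j)) m" using j by (simp only: Tf_D Tf_g)
  show ?thesis
  proof (cases "j = i")
    case True
    have "sc ((-1) ^ m) * (sc ((vi * vi) ^ (\<Sum>k<m. k)) * (D (Fg i) m * PP i ^ m)) \<in> MZ n"
      using iiF by (intro zc_sc[OF MZc] zc_mult[OF MZc] zc_power[OF MZc] MZ_u UZ_DF UZ_K UZ_Ki Zset_m1pow Zset_sq_vi; simp)
    then show ?thesis unfolding Ts True using LE[OF i1 iN, of m] zc_cg[OF MZc] cg_sym by blast
  next
    case False
    show ?thesis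
    proof (cases "i + 1 = j \<or> j + 1 = i")
      case True
      have q: "vv \<in> qset" by (simp add: qset_def)
      have "D (Eg i * Eg j - sc (inverse vv) * (Eg j * Eg i)) m \<in> MZ n"
        using True by (intro W_in_serre[OF q rSE[OF iiF(3) j(1)] rSE[OF j(1) iiF(3)] MZc] MZ_u UZ_DE iiF j) auto
      then have "sc ((-1) ^ m) * D (Eg i * Eg j - sc vi * (Eg j * Eg i)) m \<in> MZ n"
        by (intro zc_sc[OF MZc] Zset_m1pow) simp
      moreover have "Tg i (GE j) = - (Eg i * Eg j - sc vi * (Eg j * Eg i))" using True False by (auto simp: algebra_simps)
      ultimately show ?thesis unfolding Ts by (simp only: D_neg)
    next
      case False2: False
      then show ?thesis unfolding Ts using j False by (simp add: MZ_u UZ_DE)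
    qed
  qed
next
  fix j m assume j: "j \<in> {1..<n}" "s = D (Fg j) m"
  have Ts: "Tfree i s = D (Tg i (GF j)) m" using j by (simp only: Tf_D Tf_g)
  show ?thesis
  proof (cases "j = i")
    case True
    have "sc ((-1) ^ m) * (sc ((vv * vv) ^ (\<Sum>k<m. k)) * (PPi i ^ m * D (Eg i) m)) \<in> MZ n"
      using iiF by (intro zc_sc[OF MZc] zc_mult[OF MZc] zc_power[OF MZc] MZ_u UZ_DE UZ_K UZ_Ki Zset_m1pow Zset_sq_vv; simp)
    then show ?thesis unfolding Ts True using LF[OF i1 iN, of m] zc_cg[OF MZc] cg_sym by blast
  next
    case False
    show ?thesis
    proof (cases "i + 1 = j \<or> j + 1 = i")
      case True
      have q: "vi \<in> qset" by (simp add: qset_def)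
      have s1: "cg n (Fg j ^ 2 * Fg i - sc (vi + inverse vi) * Fg j * Fg i * Fg j + Fg i * Fg j ^ 2) 0"
        using rSF[OF j(1) iiF(3)] True by (auto simp: add.commute)
      have s2: "cg n (Fg i ^ 2 * Fg j - sc (vi + inverse vi) * Fg i * Fg j * Fg i + Fg j * Fg i ^ 2) 0"
        using rSF[OF iiF(3) j(1)] True by (auto simp: add.commute)
      have "D (Fg j * Fg i - sc (inverse vi) * (Fg i * Fg j)) m \<in> MZ n"
        by (intro W_in_serre[OF q s1 s2 MZc] MZ_u UZ_DF iiF j)
      then have "sc ((-1) ^ m) * D (Fg j * Fg i - sc vv * (Fg i * Fg j)) m \<in> MZ n"
        by (intro zc_sc[OF MZc] Zset_m1pow) simp
      moreover have "Tg i (GF j) = - (Fg j * Fg i - sc vv * (Fg i * Fg j))" using True False by (auto simp: algebra_simps)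
      ultimately show ?thesis unfolding Ts by (simp only: D_neg)
    next
      case False2: False
      then show ?thesis unfolding Ts using j False by (simp add: MZ_u UZ_DF)
    qed
  qed
qed

end


context
  fixes n i :: nat
  assumes i1: "1 \<le> i" and iN: "i < n"
begin

lemma iiR: "i \<in> {1..n}" "Suc i \<in> {1..n}" "i \<in> {1..<n}" using i1 iN by auto

lemmas SZc = zclosed_SZ[of n i]

lemma rev_K: "k \<in> {1..n} \<Longrightarrow> Kg k \<in> SZ n i"
  using SZ_T[OF UZ_K[OF swp_range[OF iN _ i1]], of k i] by (simp add: Tf_g swp_swp)
lemma rev_Ki: "k \<in> {1..n} \<Longrightarrow> Kig k \<in> SZ n i"
  using SZ_T[OF UZ_Ki[OF swp_range[OF iN _ i1]], of k i] by (simp add: Tf_g swp_swp)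
lemma rev_Q: "k \<in> {1..n} \<Longrightarrow> qbinK k t \<in> SZ n i"
proof -
  assume k: "k \<in> {1..n}"
  have "qbinK (swp i k) t \<in> UZ n" by (rule UZ_Q[OF swp_range[OF iN k i1]])
  from SZ_T[OF this, where i=i] show ?thesis by (simp add: T_qbinK swp_swp)
qed

lemma rev_DE: "j \<in> {1..<n} \<Longrightarrow> D (Eg j) m \<in> SZ n i"
proof -
  assume j: "j \<in> {1..<n}"
  show ?thesis
  proof (cases "j = i")
    case True
    have pp: "PP i \<in> SZ n i" using SZ_T[OF UZ_mult[OF UZ_K[OF iiR(2)] UZ_Ki[OF iiR(1)]], of i] T_PP[OF i1 iN] by simp
    have dd: "D (Tg i (GF i)) m \<in> SZ n i" using SZ_T[OF UZ_DF[OF iiR(3)], of i m] by (simp only: Tf_D Tf_g)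
    have "sc ((-1) ^ m) * (sc ((vi * vi) ^ (\<Sum>k<m. k)) * (PP i ^ m * D (Tg i (GF i)) m)) \<in> SZ n i"
      by (rule zc_sc[OF SZc Zset_m1pow zc_sc[OF SZc Zset_sq_vi zc_mult[OF SZc zc_power[OF SZc pp] dd]]])
    then show ?thesis using True revE_i[OF i1 iN, of m] zc_cg[OF SZc] by blast
  next
    case False
    show ?thesis
    proof (cases "i + 1 = j \<or> j + 1 = i")
      case True then show ?thesis by (rule revE_adj[OF i1 iN j])
    next
      case False2: False
      then show ?thesis using SZ_T[OF UZ_DE[OF j], of i m] False by (simp add: Tf_D Tf_g)
    qed
  qed
qed

lemma rev_DF: "j \<in> {1..<n} \<Longrightarrow> D (Fg j) m \<in> SZ n i"
proof -
  assume j: "j \<in> {1..<n}"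
  show ?thesis
  proof (cases "j = i")
    case True
    have pp: "PPi i \<in> SZ n i" using SZ_T[OF UZ_mult[OF UZ_Ki[OF iiR(2)] UZ_K[OF iiR(1)]], of i] T_PPi[OF i1 iN] by simp
    have dd: "D (Tg i (GE i)) m \<in> SZ n i" using SZ_T[OF UZ_DE[OF iiR(3)], of i m] by (simp only: Tf_D Tf_g)
    have "sc ((-1) ^ m) * (sc ((vv * vv) ^ (\<Sum>k<m. k)) * (D (Tg i (GE i)) m * PPi i ^ m)) \<in> SZ n i"
      by (rule zc_sc[OF SZc Zset_m1pow zc_sc[OF SZc Zset_sq_vv zc_mult[OF SZc dd zc_power[OF SZc pp]]]])
    then show ?thesis using True revF_i[OF i1 iN, of m] zc_cg[OF SZc] by blast
  next
    case False
    show ?thesis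
    proof (cases "i + 1 = j \<or> j + 1 = i")
      case True then show ?thesis by (rule revF_adj[OF i1 iN j])
    next
      case False2: False
      then show ?thesis using SZ_T[OF UZ_DF[OF j], of i m] False by (simp add: Tf_D Tf_g)
    qed
  qed
qed

lemma rev_E: "j \<in> {1..<n} \<Longrightarrow> Eg j \<in> SZ n i" using rev_DE[of j 1] by simp
lemma rev_F: "j \<in> {1..<n} \<Longrightarrow> Fg j \<in> SZ n i" using rev_DF[of j 1] by simp

lemma rev_Kb: "k \<in> {1..n} \<Longrightarrow> Kbg k \<in> SZ n i"
proof -
  assume k: "k \<in> {1..n}"
  have Ki1: "Kbg (Suc i) \<in> SZ n i" using SZ_T[OF UZ_Kb[OF iiR(1)], of i] by (simp add: Tf_g)
  show ?thesis
  proof (cases "k = i")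
    case True
    have "Kbg i = Tfree i (Kbg (Suc i)) - sc (vv - vi) * Kbg (Suc i) * Fg i * Eg i + sc (vv - vi) * Fg i * Eg i * Kbg (Suc i)"
      by (simp add: Tf_g)
    also have "\<dots> \<in> SZ n i"
      by (simp only: mult.assoc) (intro zc_add[OF SZc] zc_diff[OF SZc] zc_vvvi[OF SZc] zc_mult[OF SZc] SZ_T UZ_Kb iiR Ki1 rev_E rev_F)
    finally show ?thesis using True by simp
  next
    case False
    show ?thesis
    proof (cases "k = Suc i")
      case True then show ?thesis using Ki1 by simp
    next
      case False2: False
      then show ?thesis using SZ_T[OF UZ_Kb[OF k], of i] False by (simp add: Tf_g)
    qed
  qed
qed

lemma rev_Eb: "j \<in> {1..<n} \<Longrightarrow> Ebg j \<in> SZ n i"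
proof -
  assume j: "j \<in> {1..<n}"
  then have jn: "j \<in> {1..n}" by auto
  let ?Z = "Kbg j * Eg j - sc vv * Eg j * Kbg j"
  have "cg n ?Z (Ebg j * Kig j)" using rKbE[OF j] unfolding cg_def by (simp add: algebra_simps)
  then have "cg n (?Z * Kg j) (Ebg j * (Kig j * Kg j))" using cg_rmult by (simp only: mult.assoc[symmetric])
  also have "cg n \<dots> (Ebg j * 1)" by (intro cg_lmult rK2 jn)
  finally have c: "cg n (?Z * Kg j) (Ebg j)" by simp
  have "?Z * Kg j \<in> SZ n i"
    by (simp only: mult.assoc) (intro zc_diff[OF SZc] zc_mult[OF SZc] zc_sc[OF SZc] rev_Kb rev_E rev_K jn j Zset_vv)
  then show ?thesis using c zc_cg[OF SZc] by blast
qed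

lemma rev_Fb: "j \<in> {1..<n} \<Longrightarrow> Fbg j \<in> SZ n i"
proof -
  assume j: "j \<in> {1..<n}"
  then have jn: "j \<in> {1..n}" by auto
  let ?Z = "- (Kbg j * Fg j - sc vv * Fg j * Kbg j)"
  have r: "Kbg j * Fg j - sc vv * Fg j * Kbg j + Fbg j * Kg j \<in> rel_ideal n" using rKbF[OF j] unfolding cg_def by simp
  have "?Z - Fbg j * Kg j = - (Kbg j * Fg j - sc vv * Fg j * Kbg j + Fbg j * Kg j)" by (simp add: algebra_simps)
  then have "cg n ?Z (Fbg j * Kg j)" unfolding cg_def using I_uminus[OF r] by simp
  then have "cg n (?Z * Kig j) (Fbg j * (Kg j * Kig j))" using cg_rmult by (simp only: mult.assoc[symmetric])
  also have "cg n \<dots> (Fbg j * 1)" by (intro cg_lmult rK1 jn)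
  finally have c: "cg n (?Z * Kig j) (Fbg j)" by simp
  have "?Z * Kig j \<in> SZ n i"
    by (simp only: mult.assoc) (intro zc_mult[OF SZc] zc_uminus[OF SZc] zc_diff[OF SZc] zc_sc[OF SZc] rev_Kb rev_F rev_Ki jn j Zset_vv)
  then show ?thesis using c zc_cg[OF SZc] by blast
qed

lemma rev: "s \<in> UZ_gens n \<Longrightarrow> s \<in> SZ n i"
  by (erule gens_cases) (auto intro: rev_K rev_Ki rev_Kb rev_Q rev_Eb rev_Fb rev_DE rev_DF)

end

theorem lemma3p1:
  fixes n i :: nat
  assumes "1 \<le> i" and "i < n"
  shows "{Tfree i x + y | x y. x \<in> UZ n \<and> y \<in> rel_ideal n}
       = {x + y | x y. x \<in> UZ n \<and> y \<in> rel_ideal n}"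
  by (rule main_from_gens[OF fwd[OF assms] rev[OF assms]])


end
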